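(* Let $q=r^2$ where $r$ is an odd prime power, and let $q-1=e_1f_1=e_2f_2$ with positive integers $e_1,f_1,e_2,f_2$. Suppose there is an integer $l\geq 2$ with $e_1\equiv 2^l \pmod{2^{l+1}}$ and $2^l\mid e_2$. Suppose further that $2e_2\mid e_1(r+1)$ and $e_1\mid e_2(r-1)$. Let $D_1=\frac{e_1}{\gcd(e_1,e_2)}$, $D_2=\frac{e_2}{\gcd(e_1,e_2)}$, let $s,t$ be integers with $1\leq s\leq D_1$, $1\leq t\leq D_2$, and put $n_1=sf_1+tf_2$. Then: (1) if both $\frac{r+1}{2}\left(\frac{te_1}{e_2}+1\right)$ (i.e. the integer $\frac{te_1(r+1)}{2e_2}+\frac{r+1}{2}$) and $n_1$ are even, there exists a $q$-ary MDS self-dual code of length $n_1$; (2) if both $\frac{r+1}{2}\left(\frac{te_1}{e_2}+t\right)$ (i.e. the integer $\frac{te_1(r+1)}{2e_2}+\frac{t(r+1)}{2}$) and $\frac{(t-1)(r+1)}{2}$ are even, and $n_1$ is odd, there exists a $q$-ary MDS self-dual code of length $n_1+1$; (3) if $\frac{r+1}{2}\left(\frac{te_1}{e_2}+t\right)$, $\frac{(t-1)(r+1)}{2}$ and $n_1$ are all even, there exists a $q$-ary MDS self-dual code of length $n_1+2$.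
   Context: $\mathbb{F}_q$ denotes the finite field with $q$ elements. A linear code of length $n$ over $\mathbb{F}_q$ is a subspace of $\mathbb{F}_q^n$; an $[n,k,d]$ code has dimension $k$ and minimum Hamming distance $d$, and it is MDS if $d=n-k+1$. The (Euclidean) dual of a code $C$ is $C^\perp=\{x\in\mathbb{F}_q^n : \sum_i x_ic_i=0 \text{ for all } c\in C\}$; $C$ is self-dual if $C=C^\perp$. A $q$-ary MDS self-dual code of length $n$ is a linear code over $\mathbb{F}_q$ of length $n$ that is both MDS and self-dual. *)

theory Defs
  imports Main HOL.Vector_Spaces "HOL-Library.Function_Algebras" "HOL-Computational_Algebra.Primes"
begin

text \<open>Vectors of length n over a field 'a are represented as functions nat => 'a
  vanishing outside {0..<n}. The ambient space F^n is vecs n.\<close>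

definition vecs :: "nat \<Rightarrow> (nat \<Rightarrow> 'a::field) set" where
  "vecs n = {v. \<forall>i\<ge>n. v i = 0}"

definition vscale :: "'a::field \<Rightarrow> (nat \<Rightarrow> 'a) \<Rightarrow> (nat \<Rightarrow> 'a)" where
  "vscale c v = (\<lambda>i. c * v i)"

definition linear_code :: "nat \<Rightarrow> (nat \<Rightarrow> 'a::field) set \<Rightarrow> bool" where
  "linear_code n C \<longleftrightarrow> C \<subseteq> vecs n \<and> 0 \<in> C \<and>
     (\<forall>x\<in>C. \<forall>y\<in>C. x + y \<in> C) \<and> (\<forall>c. \<forall>x\<in>C. vscale c x \<in> C)"

definition code_dim :: "(nat \<Rightarrow> 'a::field) set \<Rightarrow> nat" where
  "code_dim C = vector_space.dim vscale C"

definition hweight :: "nat \<Rightarrow> (nat \<Rightarrow> 'a::field) \<Rightarrow> nat" where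
  "hweight n v = card {i. i < n \<and> v i \<noteq> 0}"

definition hdist :: "nat \<Rightarrow> (nat \<Rightarrow> 'a::field) \<Rightarrow> (nat \<Rightarrow> 'a) \<Rightarrow> nat" where
  "hdist n x y = card {i. i < n \<and> x i \<noteq> y i}"

definition min_dist :: "nat \<Rightarrow> (nat \<Rightarrow> 'a::field) set \<Rightarrow> nat" where
  "min_dist n C = Min {hdist n x y | x y. x \<in> C \<and> y \<in> C \<and> x \<noteq> y}"

definition is_MDS :: "nat \<Rightarrow> (nat \<Rightarrow> 'a::field) set \<Rightarrow> bool" where
  "is_MDS n C \<longleftrightarrow> min_dist n C = n - code_dim C + 1"

definition dual_code :: "nat \<Rightarrow> (nat \<Rightarrow> 'a::field) set \<Rightarrow> (nat \<Rightarrow> 'a) set" where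
  "dual_code n C = {x \<in> vecs n. \<forall>c\<in>C. (\<Sum>i<n. x i * c i) = 0}"

definition self_dual :: "nat \<Rightarrow> (nat \<Rightarrow> 'a::field) set \<Rightarrow> bool" where
  "self_dual n C \<longleftrightarrow> C = dual_code n C"

definition MDS_self_dual_code :: "nat \<Rightarrow> (nat \<Rightarrow> 'a::{field,finite}) set \<Rightarrow> bool" where
  "MDS_self_dual_code n C \<longleftrightarrow> linear_code n C \<and> is_MDS n C \<and> self_dual n C"

definition prime_power :: "nat \<Rightarrow> bool" where
  "prime_power r \<longleftrightarrow> (\<exists>p m. prime p \<and> m \<ge> 1 \<and> r = p ^ m)"

end

theory Submission
  imports "HOL-Number_Theory.Residues" Defs "HOL-Computational_Algebra.Polynomial"
begin

lemma vs_vscale: "vector_space (vscale :: 'a::field \<Rightarrow> (nat \<Rightarrow> 'a) \<Rightarrow> _)"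
  by unfold_locales (auto simp: vscale_def fun_eq_iff algebra_simps)

interpretation V: vector_space "vscale :: 'a::field \<Rightarrow> (nat \<Rightarrow> 'a) \<Rightarrow> _"
  by (rule vs_vscale)

definition Lb :: "(nat \<Rightarrow> 'a::field) \<Rightarrow> nat \<Rightarrow> nat \<Rightarrow> 'a poly" where
  "Lb a n i = (\<Prod>j\<in>{..<n}-{i}. [:- a j, 1:])"
definition Pd :: "(nat \<Rightarrow> 'a::field) \<Rightarrow> nat \<Rightarrow> nat \<Rightarrow> 'a" where
  "Pd a n i = (\<Prod>j\<in>{..<n}-{i}. (a i - a j))"

lemma degree_Lb: "i < n \<Longrightarrow> degree (Lb a n i) = n - 1"
  unfolding Lb_def by (subst degree_prod_sum_eq) auto

lemma lead_Lb: "i < n \<Longrightarrow> coeff (Lb a n i) (n - 1) = 1"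
  using lead_coeff_prod[of "\<lambda>j. [:- a j, 1:]" "{..<n}-{i}"] degree_Lb[of i n a]
  by (simp add: Lb_def)

lemma poly_Lb: "poly (Lb a n i) x = (\<Prod>j\<in>{..<n}-{i}. (x - a j))"
  unfolding Lb_def poly_prod by simp

lemma poly_Lb_other: "m < n \<Longrightarrow> m \<noteq> i \<Longrightarrow> poly (Lb a n i) (a m) = 0"
  unfolding poly_Lb by (rule prod_zero) auto

lemma poly_Lb_self: "poly (Lb a n i) (a i) = Pd a n i"
  unfolding poly_Lb Pd_def ..

lemma Pd_nz: "inj_on a {..<n} \<Longrightarrow> i < n \<Longrightarrow> Pd a n i \<noteq> 0"
  unfolding Pd_def by (auto simp: inj_on_def)

lemma zero_poly_roots:
  fixes p :: "'a::field poly"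
  assumes inj: "inj_on a {..<n}" and deg: "degree p < n" and z: "\<forall>i<n. poly p (a i) = 0"
  shows "p = 0"
proof (rule ccontr)
  assume p: "p \<noteq> 0"
  have "a ` {..<n} \<subseteq> {x. poly p x = 0}" using z by auto
  hence "card (a ` {..<n}) \<le> card {x. poly p x = 0}"
    by (intro card_mono poly_roots_finite p)
  also have "\<dots> \<le> degree p" by (rule card_poly_roots_bound[OF p])
  finally show False using inj deg by (simp add: card_image)
qed

definition interp :: "(nat \<Rightarrow> 'a::field) \<Rightarrow> nat \<Rightarrow> (nat \<Rightarrow> 'a) \<Rightarrow> 'a poly" where
  "interp a n y = (\<Sum>i<n. smult (y i / Pd a n i) (Lb a n i))"

lemma poly_interp:
  assumes inj: "inj_on a {..<n}" and m: "m < n"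
  shows "poly (interp a n y) (a m) = y m"
proof -
  have "poly (interp a n y) (a m) = (\<Sum>i<n. y i / Pd a n i * poly (Lb a n i) (a m))"
    by (simp add: interp_def poly_sum)
  also have "\<dots> = (\<Sum>i\<in>{m}. y i / Pd a n i * poly (Lb a n i) (a m))"
    by (rule sum.mono_neutral_right) (use m in \<open>auto simp: poly_Lb_other\<close>)
  also have "\<dots> = y m" using Pd_nz[OF inj m] by (simp add: poly_Lb_self)
  finally show ?thesis .
qed

lemma degree_interp: "n \<ge> 1 \<Longrightarrow> degree (interp a n y) < n"
proof -
  assume n: "n \<ge> 1"
  have "degree (interp a n y) \<le> n - 1"
    unfolding interp_def
    by (rule degree_sum_le) (auto intro: order.trans[OF degree_smult_le] simp: degree_Lb)
  thus ?thesis using n by linarith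
qed

lemma coeff_interp: "coeff (interp a n y) (n - 1) = (\<Sum>i<n. y i / Pd a n i)"
  unfolding interp_def coeff_sum by (intro sum.cong) (simp_all add: lead_Lb[simplified])

lemma interp_unique:
  assumes inj: "inj_on a {..<n}" and deg: "degree h < n"
  shows "h = interp a n (\<lambda>i. poly h (a i))"
proof -
  have n: "n \<ge> 1" using deg by simp
  have "h - interp a n (\<lambda>i. poly h (a i)) = 0"
    by (rule zero_poly_roots[OF inj]) (auto intro!: degree_diff_less deg degree_interp n simp: poly_interp[OF inj])
  thus ?thesis by simp
qed

lemma lagrange_sum:
  assumes inj: "inj_on a {..<n}" and deg: "degree h < n"
  shows "(\<Sum>i<n. poly h (a i) / Pd a n i) = coeff h (n - 1)"
proof -
  have "coeff h (n - 1) = coeff (interp a n (\<lambda>i. poly h (a i))) (n - 1)"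
    using interp_unique[OF inj deg] by metis
  thus ?thesis using coeff_interp[of a n "\<lambda>i. poly h (a i)"] by simp
qed

definition cw :: "(nat \<Rightarrow> 'a::field) \<Rightarrow> (nat \<Rightarrow> 'a) \<Rightarrow> nat \<Rightarrow> nat \<Rightarrow> bool \<Rightarrow> 'a poly \<Rightarrow> nat \<Rightarrow> 'a" where
  "cw a v n k ext f = (\<lambda>i. if i < n then v i * poly f (a i) else if ext \<and> i = n then coeff f (k - 1) else 0)"

locale grs =
  fixes a v :: "nat \<Rightarrow> 'a::field" and n k :: nat and ext :: bool and c :: 'a
  assumes inj: "inj_on a {..<n}" and k1: "k \<ge> 1"
    and vc: "\<And>i. i < n \<Longrightarrow> v i \<noteq> 0 \<and> (v i)^2 * Pd a n i = c"
    and c0: "c \<noteq> 0"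
    and Nk: "(if ext then Suc n else n) = 2 * k"
    and ce: "ext \<Longrightarrow> c = -1"
begin

abbreviation "N \<equiv> (if ext then Suc n else n)"
abbreviation "cwf \<equiv> cw a v n k ext"
definition "C = cwf ` {f. degree f < k}"

lemma kn: "k \<le> n" using Nk k1 by (cases ext) auto

lemma cw_add: "cwf (f + g) = cwf f + cwf g"
  by (auto simp: cw_def fun_eq_iff algebra_simps)
lemma cw_diff: "cwf (f - g) = cwf f - cwf g"
  by (auto simp: cw_def fun_eq_iff algebra_simps)
lemma cw_smult: "cwf (smult d f) = vscale d (cwf f)"
  by (auto simp: cw_def fun_eq_iff algebra_simps vscale_def)
lemma cw_0: "cwf 0 = 0"
  by (auto simp: cw_def fun_eq_iff)
lemma cw_sum: "cwf (\<Sum>i\<in>S. p i) = (\<Sum>i\<in>S. cwf (p i))"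
  by (induction S rule: infinite_finite_induct) (auto simp: cw_0 cw_add)

lemma cw_zero_imp: assumes "degree f < k" "cwf f = 0" shows "f = 0"
proof (rule zero_poly_roots[OF inj])
  show "degree f < n" using assms kn by simp
  show "\<forall>i<n. poly f (a i) = 0"
  proof (intro allI impI)
    fix i assume i: "i < n"
    have "cwf f i = 0" using assms by simp
    thus "poly f (a i) = 0" using vc[OF i] i by (simp add: cw_def)
  qed
qed

lemma C_vecs: "C \<subseteq> vecs N"
  by (auto simp: C_def vecs_def cw_def)

lemma linear: "linear_code N C"
  unfolding linear_code_def
proof (intro conjI ballI allI C_vecs)
  show "0 \<in> C" unfolding C_def using k1 by (auto intro!: image_eqI[of _ _ 0] simp: cw_0)
  fix x y assume "x \<in> C" "y \<in> C"
  then obtain f g where "x = cwf f" "y = cwf g" "degree f < k" "degree g < k" by (auto simp: C_def)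
  thus "x + y \<in> C" unfolding C_def
    by (auto intro!: image_eqI[of _ _ "f + g"] degree_add_less simp: cw_add)
next
  fix d x assume "x \<in> C"
  then obtain f where "x = cwf f" "degree f < k" by (auto simp: C_def)
  thus "vscale d x \<in> C" unfolding C_def
    by (auto intro!: image_eqI[of _ _ "smult d f"] intro: le_less_trans[OF degree_smult_le] simp: cw_smult)
qed

lemma subspace_C: "V.subspace C"
  using linear unfolding V.subspace_def linear_code_def by auto

definition "B = (\<lambda>m. cwf (monom 1 m)) ` {..<k}"

lemma inj_B: "inj_on (\<lambda>m. cwf (monom 1 m)) {..<k}"
proof
  fix m m' assume m: "m \<in> {..<k}" "m' \<in> {..<k}" and e: "cwf (monom 1 m) = cwf (monom 1 m')"
  have "cwf (monom 1 m - monom 1 m') = 0" using e by (simp add: cw_diff)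
  moreover have "degree (monom 1 m - monom 1 m' :: 'a poly) < k"
    using m by (intro degree_diff_less) (auto intro: le_less_trans[OF degree_monom_le])
  ultimately have "monom 1 m - monom 1 m' = (0 :: 'a poly)" by (rule cw_zero_imp[rotated])
  hence "coeff (monom 1 m - monom 1 m' :: 'a poly) m = 0" by simp
  thus "m = m'" by (auto split: if_splits)
qed

lemma card_B: "card B = k"
  unfolding B_def by (simp add: card_image[OF inj_B])

lemma indep_B: "V.independent B"
proof
  assume "V.dependent B"
  then obtain u where u: "\<exists>w\<in>B. u w \<noteq> 0" "(\<Sum>w\<in>B. vscale (u w) w) = 0"
    using V.dependent_finite[of B] by (auto simp: B_def)
  define p where "p = (\<Sum>m<k. monom (u (cwf (monom 1 m))) m)"
  have "(\<Sum>w\<in>B. vscale (u w) w) = (\<Sum>m<k. vscale (u (cwf (monom 1 m))) (cwf (monom 1 m)))"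
    unfolding B_def by (rule sum.reindex[OF inj_B, unfolded comp_def])
  also have "\<dots> = cwf p"
    unfolding p_def cw_sum by (intro sum.cong) (auto simp flip: cw_smult simp: smult_monom)
  finally have "cwf p = 0" using u by simp
  moreover have "degree p < k" unfolding p_def
    using k1 by (intro order.strict_trans1[OF degree_sum_le[of _ _ "k - 1"]]) (auto intro: order.trans[OF degree_monom_le])
  ultimately have "p = 0" by (intro cw_zero_imp)
  from u obtain m where m: "m < k" "u (cwf (monom 1 m)) \<noteq> 0" by (auto simp: B_def)
  have "coeff p m = u (cwf (monom 1 m))"
    unfolding p_def coeff_sum using m by simp
  thus False using m \<open>p = 0\<close> by simp
qed

lemma span_B: "V.span B = C"
proof (rule V.span_subspace)
  show "B \<subseteq> C" unfolding B_def C_def by (auto intro: le_less_trans[OF degree_monom_le])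
  show "V.subspace C" by (rule subspace_C)
  show "C \<subseteq> V.span B"
  proof
    fix x assume "x \<in> C"
    then obtain f where f: "x = cwf f" "degree f < k" by (auto simp: C_def)
    have "f = (\<Sum>m\<le>k - 1. monom (coeff f m) m)"
      using f by (intro poly_as_sum_of_monoms'[symmetric]) simp
    also have "\<dots> = (\<Sum>m<k. smult (coeff f m) (monom 1 m))"
      using k1 by (intro sum.cong) (auto simp: smult_monom)
    finally have "x = (\<Sum>m<k. vscale (coeff f m) (cwf (monom 1 m)))"
      using f by (metis (no_types, lifting) cw_smult cw_sum sum.cong)
    also have "\<dots> \<in> V.span B"
      by (intro V.span_sum V.span_scale V.span_base) (auto simp: B_def)
    finally show "x \<in> V.span B" .
  qed
qed

lemma dim_C: "code_dim C = k"
  unfolding code_dim_def using span_B V.dim_span[of B] V.dim_eq_card_independent[OF indep_B] card_B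
  by simp

lemma roots_card: assumes "h \<noteq> 0"
  shows "card {i. i < n \<and> poly h (a i) = 0} \<le> degree h"
proof -
  let ?Z = "{i. i < n \<and> poly h (a i) = 0}"
  have "card ?Z = card (a ` ?Z)" using inj by (intro card_image[symmetric]) (auto intro: inj_on_subset)
  also have "\<dots> \<le> card {x. poly h x = 0}" by (intro card_mono poly_roots_finite assms) auto
  also have "\<dots> \<le> degree h" by (rule card_poly_roots_bound[OF assms])
  finally show ?thesis .
qed

lemma weight_lb: assumes "degree h < k" "h \<noteq> 0"
  shows "N - k + 1 \<le> card {i. i < N \<and> cwf h i \<noteq> 0}"
proof -
  let ?Z = "{i. i < n \<and> poly h (a i) = 0}"
  have eq: "{i. i < n \<and> cwf h i \<noteq> 0} = {..<n} - ?Z"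
    using vc by (auto simp: cw_def)
  have cz: "card ?Z \<le> degree h" by (rule roots_card[OF assms(2)])
  have c1: "card {i. i < n \<and> cwf h i \<noteq> 0} \<ge> n - degree h"
    unfolding eq using cz by (subst card_Diff_subset) auto
  show ?thesis
  proof (cases ext)
    case False
    have "n - k + 1 \<le> n - degree h" using assms(1) kn by linarith
    thus ?thesis using False c1 by simp
  next
    case True
    show ?thesis
    proof (cases "coeff h (k - 1) = 0")
      case False
      have sub: "insert n {i. i < n \<and> cwf h i \<noteq> 0} \<subseteq> {i. i < N \<and> cwf h i \<noteq> 0}"
        using True False by (auto simp: cw_def)
      have "card (insert n {i. i < n \<and> cwf h i \<noteq> 0}) = Suc (card {i. i < n \<and> cwf h i \<noteq> 0})"
        by simp
      moreover have "card (insert n {i. i < n \<and> cwf h i \<noteq> 0}) \<le> card {i. i < N \<and> cwf h i \<noteq> 0}"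
        by (rule card_mono[OF _ sub]) simp
      ultimately show ?thesis using c1 True assms(1) kn by simp
    next
      case cz0: True
      have "degree h \<noteq> k - 1" using cz0 assms(2) by (metis leading_coeff_0_iff)
      hence "degree h < k - 1" using assms(1) by linarith
      moreover have "{i. i < n \<and> cwf h i \<noteq> 0} \<subseteq> {i. i < N \<and> cwf h i \<noteq> 0}" by auto
      hence "card {i. i < n \<and> cwf h i \<noteq> 0} \<le> card {i. i < N \<and> cwf h i \<noteq> 0}"
        by (intro card_mono) auto
      ultimately show ?thesis using c1 True kn by simp
    qed
  qed
qed

definition "h0 = (\<Prod>j<k-1. [:- a j, 1:])"

lemma degree_h0: "degree h0 = k - 1"
  unfolding h0_def by (subst degree_prod_sum_eq) auto

lemma coeff_h0: "coeff h0 (k - 1) = 1"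
  using lead_coeff_prod[of "\<lambda>j. [:- a j, 1:]" "{..<k-1}"] degree_h0 by (simp add: h0_def)

lemma h0_weight: "card {i. i < N \<and> cwf h0 i \<noteq> 0} = N - k + 1"
proof -
  have "{i. i < N \<and> cwf h0 i \<noteq> 0} = {k-1..<N}"
  proof (intro Set.set_eqI iffI)
    fix i assume i: "i \<in> {i. i < N \<and> cwf h0 i \<noteq> 0}"
    show "i \<in> {k-1..<N}"
    proof (cases "i < n")
      case True
      with i have "poly h0 (a i) \<noteq> 0" by (auto simp: cw_def)
      hence "\<not> i < k - 1" unfolding h0_def poly_prod by auto
      thus ?thesis using i by auto
    next
      case False thus ?thesis using i kn by (auto split: if_splits)
    qed
  next
    fix i assume i: "i \<in> {k-1..<N}"
    show "i \<in> {i. i < N \<and> cwf h0 i \<noteq> 0}"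
    proof (cases "i < n")
      case True
      have "\<forall>j<k-1. a i \<noteq> a j"
      proof (intro allI impI)
        fix j assume "j < k - 1" hence "j < n" "j \<noteq> i" using i kn by auto
        thus "a i \<noteq> a j" using inj True unfolding inj_on_def by blast
      qed
      hence "poly h0 (a i) \<noteq> 0" unfolding h0_def poly_prod by auto
      thus ?thesis using True i vc[OF True] by (auto simp: cw_def)
    next
      case False thus ?thesis using i by (auto simp: cw_def coeff_h0[simplified] split: if_splits)
    qed
  qed
  thus ?thesis using kn k1 by (cases ext) auto
qed

lemma hdist_cw: "hdist N (cwf f) (cwf g) = card {i. i < N \<and> cwf (f - g) i \<noteq> 0}"
  unfolding hdist_def cw_diff by simp

lemma min_dist_C: "min_dist N C = N - k + 1"
  unfolding min_dist_def
proof (rule Min_eqI)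
  show "finite {hdist N x y |x y. x \<in> C \<and> y \<in> C \<and> x \<noteq> y}"
  proof (rule finite_subset[of _ "{..N}"])
    show "{hdist N x y |x y. x \<in> C \<and> y \<in> C \<and> x \<noteq> y} \<subseteq> {..N}"
    proof
      fix d assume "d \<in> {hdist N x y |x y. x \<in> C \<and> y \<in> C \<and> x \<noteq> y}"
      then obtain x y :: "nat \<Rightarrow> 'a" where "d = hdist N x y" by blast
      moreover have "card {i. i < N \<and> x i \<noteq> y i} \<le> card {..<N}" by (intro card_mono) auto
      ultimately show "d \<in> {..N}" by (simp add: hdist_def)
    qed
  qed simp
next
  fix d assume "d \<in> {hdist N x y |x y. x \<in> C \<and> y \<in> C \<and> x \<noteq> y}"
  then obtain f g where fg: "d = hdist N (cwf f) (cwf g)" "degree f < k" "degree g < k" "cwf f \<noteq> cwf g"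
    by (auto simp: C_def)
  have "f - g \<noteq> 0" using fg by auto
  thus "N - k + 1 \<le> d" unfolding fg hdist_cw
    by (intro weight_lb) (auto intro: degree_diff_less fg)
next
  have "cwf h0 \<noteq> cwf 0"
  proof
    assume "cwf h0 = cwf 0"
    hence "cwf (h0 - 0) = 0" by (simp add: cw_0)
    hence "h0 - 0 = 0" using degree_h0 k1 by (intro cw_zero_imp) auto
    thus False using coeff_h0 by simp
  qed
  moreover have "h0 \<in> {f. degree f < k}" "(0 :: 'a poly) \<in> {f. degree f < k}"
    using degree_h0 k1 by auto
  moreover have "N - k + 1 = hdist N (cwf h0) (cwf 0)" using h0_weight hdist_cw[of h0 0] by simp
  ultimately show "N - k + 1 \<in> {hdist N x y |x y. x \<in> C \<and> y \<in> C \<and> x \<noteq> y}"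
    unfolding C_def by blast
qed

lemma MDS: "is_MDS N C"
  unfolding is_MDS_def min_dist_C dim_C ..

lemma wsum: assumes "degree p < n"
  shows "(\<Sum>i<n. (v i)^2 * poly p (a i)) = c * coeff p (n - 1)"
proof -
  have "(\<Sum>i<n. (v i)^2 * poly p (a i)) = (\<Sum>i<n. c * (poly p (a i) / Pd a n i))"
  proof (intro sum.cong refl)
    fix i assume "i \<in> {..<n}"
    hence "Pd a n i \<noteq> 0" "(v i)^2 * Pd a n i = c" using Pd_nz[OF inj] vc by auto
    thus "(v i)^2 * poly p (a i) = c * (poly p (a i) / Pd a n i)" by (auto simp: field_simps)
  qed
  also have "\<dots> = c * (\<Sum>i<n. poly p (a i) / Pd a n i)"
    by (rule sum_distrib_left[symmetric])
  also have "\<dots> = c * coeff p (n - 1)"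
    by (simp only: lagrange_sum[OF inj assms])
  finally show ?thesis .
qed

lemma inner_cw: "(\<Sum>i<N. x i * cwf g i) =
   (\<Sum>i<n. x i * (v i * poly g (a i))) + (if ext then x n * coeff g (k - 1) else 0)"
  by (cases ext) (auto simp: cw_def intro!: sum.cong)

lemma coeff_top: assumes "degree f < k" "degree g < k"
  shows "coeff (f * g) (2 * k - 2) = coeff f (k - 1) * coeff g (k - 1)"
proof -
  have "coeff (f * g) (2 * k - 2) = (\<Sum>i\<le>2 * k - 2. coeff f i * coeff g (2 * k - 2 - i))"
    by (rule coeff_mult)
  also have "\<dots> = (\<Sum>i\<in>{k - 1}. coeff f i * coeff g (2 * k - 2 - i))"
  proof (rule sum.mono_neutral_right)
    show "\<forall>i\<in>{..2 * k - 2} - {k - 1}. coeff f i * coeff g (2 * k - 2 - i) = 0"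
    proof
      fix i assume i: "i \<in> {..2 * k - 2} - {k - 1}"
      show "coeff f i * coeff g (2 * k - 2 - i) = 0"
      proof (cases "i < k - 1")
        case True
        hence "coeff g (2 * k - 2 - i) = 0" using assms by (intro coeff_eq_0) linarith
        thus ?thesis by simp
      next
        case False
        hence "coeff f i = 0" using assms i by (intro coeff_eq_0) auto
        thus ?thesis by simp
      qed
    qed
  qed (use k1 in auto)
  also have "\<dots> = coeff f (k - 1) * coeff g (k - 1)" using k1 by simp
  finally show ?thesis .
qed

lemma C_sub_dual: "C \<subseteq> dual_code N C"
proof
  fix x assume "x \<in> C"
  then obtain f where f: "x = cwf f" "degree f < k" by (auto simp: C_def)
  show "x \<in> dual_code N C" unfolding dual_code_def
  proof (intro CollectI conjI ballI)
    show "x \<in> vecs N" using C_vecs \<open>x \<in> C\<close> by auto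
    fix y assume "y \<in> C"
    then obtain g where g: "y = cwf g" "degree g < k" by (auto simp: C_def)
    have dfg: "degree (f * g) \<le> 2 * k - 2"
      using degree_mult_le[of f g] f g by linarith
    have dn: "degree (f * g) < n" using dfg Nk k1 by (cases ext; simp; linarith)
    have "(\<Sum>i<N. x i * y i) = (\<Sum>i<n. (v i)^2 * poly (f * g) (a i))
         + (if ext then coeff f (k - 1) * coeff g (k - 1) else 0)"
      unfolding g inner_cw by (auto simp: f cw_def power2_eq_square intro!: sum.cong)
    also have "\<dots> = c * coeff (f * g) (n - 1) + (if ext then coeff f (k - 1) * coeff g (k - 1) else 0)"
      by (simp only: wsum[OF dn])
    also have "\<dots> = 0"
    proof (cases ext)
      case True
      hence "n - 1 = 2 * k - 2" using Nk by simp
      thus ?thesis using True ce coeff_top[OF f(2) g(2)] by simp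
    next
      case False
      hence "coeff (f * g) (n - 1) = 0" using Nk dfg k1 by (intro coeff_eq_0) simp
      thus ?thesis using False by simp
    qed
    finally show "(\<Sum>i<N. x i * y i) = 0" .
  qed
qed

lemma dual_sub_C: "dual_code N C \<subseteq> C"
proof
  fix x assume x: "x \<in> dual_code N C"
  hence xv: "x \<in> vecs N" and orth: "\<And>y. y \<in> C \<Longrightarrow> (\<Sum>i<N. x i * y i) = 0"
    by (auto simp: dual_code_def)
  have n1: "n \<ge> 1" using kn k1 by simp
  define h where "h = interp a n (\<lambda>i. x i / v i)"
  have hn: "degree h < n" unfolding h_def by (rule degree_interp[OF n1])
  have xi: "x i = v i * poly h (a i)" if "i < n" for i
    using vc[OF that] poly_interp[OF inj that] by (simp add: h_def)
  have mC: "cwf (monom 1 m) \<in> C" if "m < k" for m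
    unfolding C_def using that by (auto intro: le_less_trans[OF degree_monom_le])
  have key: "c * coeff (h * monom 1 m) (n - 1) + (if ext then x n * (if m = k - 1 then 1 else 0) else 0) = 0"
    if m: "m < k" and dm: "degree (h * monom 1 m) < n" for m
  proof -
    have "c * coeff (h * monom 1 m) (n - 1) + (if ext then x n * (if m = k - 1 then 1 else 0) else 0)
       = (\<Sum>i<n. (v i)^2 * poly (h * monom 1 m) (a i))
       + (if ext then x n * (if m = k - 1 then 1 else 0) else 0)"
      by (simp only: wsum[OF dm])
    also have "\<dots> = (\<Sum>i<N. x i * cwf (monom 1 m) i)"
      unfolding inner_cw by (auto simp: xi poly_monom power2_eq_square intro!: sum.cong)
    also have "\<dots> = 0" by (rule orth[OF mC[OF m]])
    finally show ?thesis .
  qed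
  have coeffm: "coeff (h * monom 1 m) j = (if j < m then 0 else coeff h (j - m))" for m j
    by (simp add: mult.commute[of h] coeff_monom_mult)
  have dh: "degree h < k"
  proof (rule ccontr)
    assume "\<not> degree h < k"
    hence d: "degree h \<ge> k" by simp
    hence h0: "h \<noteq> 0" using k1 by auto
    define m where "m = n - 1 - degree h"
    have mk: "m < k" "ext \<Longrightarrow> m \<noteq> k - 1" using d hn Nk k1 by (auto simp: m_def split: if_splits)
    have dm: "degree (h * monom 1 m) = n - 1"
      using h0 hn by (simp add: degree_mult_eq degree_monom_eq m_def)
    have "c * coeff (h * monom 1 m) (n - 1) = 0" using key[OF mk(1)] dm hn mk(2) by (auto split: if_splits)
    moreover have "coeff (h * monom 1 m) (n - 1) = coeff h (degree h)"
      unfolding coeffm using hn by (simp add: m_def)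
    ultimately show False using c0 h0 by simp
  qed
  have "x = cwf h"
  proof
    fix i
    show "x i = cwf h i"
    proof (cases "i < n")
      case True thus ?thesis by (simp add: xi cw_def)
    next
      case False
      show ?thesis
      proof (cases "ext \<and> i = n")
        case True
        have dm: "degree (h * monom 1 (k - 1)) < n"
          using degree_mult_le[of h "monom 1 (k - 1)"] degree_monom_le[of "1::'a" "k - 1"] dh Nk True k1
          by simp
        have "c * coeff (h * monom 1 (k - 1)) (n - 1) + x n = 0"
          using key[OF _ dm] k1 True by simp
        moreover have "coeff (h * monom 1 (k - 1)) (n - 1) = coeff h (k - 1)"
        proof -
          have e: "n - Suc (k - Suc 0) = k - Suc 0" "\<not> n - 1 < k - 1" using Nk True k1 by auto
          show ?thesis unfolding coeffm using e by simp
        qed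
        ultimately show ?thesis using True ce by (simp add: cw_def)
      next
        case False
        thus ?thesis using \<open>\<not> i < n\<close> xv by (auto simp: cw_def vecs_def)
      qed
    qed
  qed
  thus "x \<in> C" using dh by (auto simp: C_def)
qed

lemma MDS_self_dual: "linear_code N C \<and> is_MDS N C \<and> self_dual N C"
  unfolding self_dual_def using linear MDS C_sub_dual dual_sub_C by auto

end


lemma Pd_bij:
  assumes "bij_betw a {..<n} S" "i < n"
  shows "Pd a n i = (\<Prod>y\<in>S-{a i}. (a i - y))"
proof -
  have "bij_betw a ({..<n} - {i}) (S - {a i})"
    using assms by (metis bij_betw_DiffI bij_betw_singletonI empty_subsetI insert_subset lessThan_iff bij_betwE)
  thus ?thesis unfolding Pd_def using prod.reindex_bij_betw[of a "{..<n} - {i}" "S - {a i}" "\<lambda>y. a i - y"]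
    by simp
qed

lemma sd_from_squares:
  fixes S :: "'a::{field,finite} set"
  assumes card: "card S = N" and Nk: "N = 2 * k" and k1: "k \<ge> 1" and c0: "c \<noteq> 0"
    and sq: "\<forall>b\<in>S. \<exists>y. y^2 = c * (\<Prod>z\<in>S-{b}. (b - z))"
  shows "\<exists>C. MDS_self_dual_code N (C :: (nat \<Rightarrow> 'a) set)"
proof -
  obtain a where a: "bij_betw a {..<N} S"
    using ex_bij_betw_nat_finite[of S] card by (auto simp: atLeast0LessThan)
  have inj: "inj_on a {..<N}" using a by (simp add: bij_betw_def)
  have aS: "i < N \<Longrightarrow> a i \<in> S" for i using a by (auto simp: bij_betw_def)
  have "\<forall>i. \<exists>y. i < N \<longrightarrow> y^2 = c * Pd a N i"
    using sq aS Pd_bij[OF a] by metis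
  then obtain y where y: "\<And>i. i < N \<Longrightarrow> (y i)^2 = c * Pd a N i" by metis
  have yn: "i < N \<Longrightarrow> y i \<noteq> 0" for i using y[of i] c0 Pd_nz[OF inj] by force
  interpret G: grs a "\<lambda>i. 1 / y i" N k False "1 / c"
  proof
    fix i assume i: "i < N"
    show "1 / y i \<noteq> 0 \<and> (1 / y i)^2 * Pd a N i = 1 / c"
      using yn[OF i] y[OF i] c0 by (auto simp: field_simps power2_eq_square)
  qed (use inj k1 c0 Nk in auto)
  show ?thesis using G.MDS_self_dual unfolding MDS_self_dual_code_def by auto
qed

lemma sd_ext_from_squares:
  fixes S :: "'a::{field,finite} set"
  assumes card: "card S = n" and Nk: "Suc n = 2 * k" and k1: "k \<ge> 1"
    and sq: "\<forall>b\<in>S. \<exists>y. y^2 = - (\<Prod>z\<in>S-{b}. (b - z))"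
  shows "\<exists>C. MDS_self_dual_code (Suc n) (C :: (nat \<Rightarrow> 'a) set)"
proof -
  obtain a where a: "bij_betw a {..<n} S"
    using ex_bij_betw_nat_finite[of S] card by (auto simp: atLeast0LessThan)
  have inj: "inj_on a {..<n}" using a by (simp add: bij_betw_def)
  have aS: "i < n \<Longrightarrow> a i \<in> S" for i using a by (auto simp: bij_betw_def)
  have "\<forall>i. \<exists>y. i < n \<longrightarrow> y^2 = - Pd a n i"
    using sq aS Pd_bij[OF a] by metis
  then obtain y where y: "\<And>i. i < n \<Longrightarrow> (y i)^2 = - Pd a n i" by metis
  have yn: "i < n \<Longrightarrow> y i \<noteq> 0" for i using y[of i] Pd_nz[OF inj] by force
  interpret G: grs a "\<lambda>i. 1 / y i" n k True "-1"
  proof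
    fix i assume i: "i < n"
    show "1 / y i \<noteq> 0 \<and> (1 / y i)^2 * Pd a n i = -1"
      using yn[OF i] y[OF i] by (auto simp: field_simps power2_eq_square)
  qed (use inj k1 Nk in auto)
  show ?thesis using G.MDS_self_dual unfolding MDS_self_dual_code_def by auto
qed

definition fR :: "'a::field ring" where
  "fR = \<lparr>carrier = UNIV, monoid.mult = (*), one = 1, zero = 0, add = (+)\<rparr>"

lemma cring_fR: "cring (fR :: 'a::field ring)"
proof (rule cringI)
  show "abelian_group (fR :: 'a ring)"
    apply (rule abelian_groupI) apply (auto simp: fR_def add_ac)
    using add.right_inverse by blast
  show "comm_monoid (fR :: 'a ring)"
    by (rule comm_monoidI) (auto simp: fR_def mult_ac)
qed (simp add: fR_def distrib_right)

lemma field_fR: "field (fR :: 'a::field ring)"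
proof (rule cring.cring_fieldI2[OF cring_fR])
  show "\<zero>\<^bsub>fR\<^esub> \<noteq> \<one>\<^bsub>(fR :: 'a ring)\<^esub>" by (simp add: fR_def)
  fix x :: 'a assume "x \<in> carrier fR" "x \<noteq> \<zero>\<^bsub>fR\<^esub>"
  thus "\<exists>b\<in>carrier fR. x \<otimes>\<^bsub>fR\<^esub> b = \<one>\<^bsub>fR\<^esub>"
    by (intro bexI[of _ "inverse x"]) (auto simp: fR_def)
qed

lemma fR_pow: "x [^]\<^bsub>(fR :: 'a::field ring)\<^esub> (i::nat) = x ^ i"
  by (induction i) (auto simp: fR_def)

lemma gen_exists: "\<exists>w::'a::{field,finite}. w \<noteq> 0 \<and> (\<forall>x. x \<noteq> 0 \<longrightarrow> (\<exists>i. x = w ^ i))"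
proof -
  have "finite (carrier (fR :: 'a ring))" by simp
  from field.finite_field_mult_group_has_gen[OF field_fR this]
  obtain w :: 'a where w: "w \<in> carrier (mult_of fR)" "carrier (mult_of fR) = {w [^]\<^bsub>fR\<^esub> (i::nat) |i. i \<in> UNIV}" by blast
  from w(2) have "UNIV - {0} = {w ^ i |i. i \<in> UNIV}"
    by (simp add: fR_pow) (simp add: fR_def)
  moreover from w(1) have "w \<noteq> 0" by (simp add: fR_def)
  ultimately show ?thesis by blast
qed

lemma power_card_minus1:
  fixes x :: "'a::{field,finite}"
  assumes "x \<noteq> 0" shows "x ^ (card (UNIV :: 'a set) - 1) = 1"
proof -
  have "(\<Prod>y\<in>UNIV-{0}. x * y) = (\<Prod>y\<in>UNIV-{0}. y)"
    by (rule prod.reindex_bij_witness[of _ "\<lambda>y. y / x" "\<lambda>y. x * y"]) (use assms in auto)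
  moreover have "(\<Prod>y\<in>UNIV-{0}. x * y) = x ^ card (UNIV - {0::'a}) * (\<Prod>y\<in>UNIV-{0}. y)"
    by (simp add: prod.distrib)
  moreover have "(\<Prod>y\<in>UNIV-{0::'a}. y) \<noteq> 0" by simp
  moreover have "card (UNIV - {0::'a}) = card (UNIV :: 'a set) - 1" by (simp add: card_Diff_singleton)
  ultimately show ?thesis by simp
qed

lemma gen_order:
  fixes w :: "'a::{field,finite}"
  assumes w0: "w \<noteq> 0" and gen: "\<forall>x. x \<noteq> 0 \<longrightarrow> (\<exists>i. x = w ^ i)"
  shows "w ^ k = 1 \<longleftrightarrow> (card (UNIV :: 'a set) - 1) dvd k"
proof
  let ?N = "card (UNIV :: 'a set) - 1"
  assume wk: "w ^ k = 1"
  show "?N dvd k"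
  proof (rule ccontr)
    assume nd: "\<not> ?N dvd k"
    define k' where "k' = k mod ?N"
    have k'0: "k' > 0"
    proof (rule ccontr)
      assume "\<not> k' > 0" hence "k mod ?N = 0" by (simp add: k'_def)
      hence "?N dvd k" by (rule mod_0_imp_dvd)
      with nd show False ..
    qed
    have "?N > 0"
    proof -
      have "card {0, 1::'a} \<le> card (UNIV :: 'a set)" by (rule card_mono) auto
      thus ?thesis by simp
    qed
    hence k'N: "k' < ?N" by (simp add: k'_def)
    have wk': "w ^ k' = 1"
    proof -
      have "w ^ k = w ^ (?N * (k div ?N) + k')" unfolding k'_def by (simp only: mult_div_mod_eq)
      also have "\<dots> = w ^ (?N * (k div ?N)) * w ^ k'" by (rule power_add)
      also have "w ^ (?N * (k div ?N)) = (w ^ ?N) ^ (k div ?N)" by (rule power_mult)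
      also have "\<dots> = 1" using power_card_minus1[OF w0] by simp
      finally show ?thesis using wk by simp
    qed
    have "UNIV - {0} \<subseteq> (\<lambda>i. w ^ i) ` {..<k'}"
    proof
      fix x :: 'a assume "x \<in> UNIV - {0}"
      then obtain i where i: "x = w ^ i" using gen by auto
      have "w ^ i = w ^ (k' * (i div k') + i mod k')" by (simp only: mult_div_mod_eq)
      also have "\<dots> = w ^ (k' * (i div k')) * w ^ (i mod k')" by (rule power_add)
      also have "w ^ (k' * (i div k')) = (w ^ k') ^ (i div k')" by (rule power_mult)
      also have "\<dots> = 1" using wk' by simp
      finally have "x = w ^ (i mod k')" using i by simp
      moreover have "i mod k' \<in> {..<k'}" using k'0 by simp
      ultimately show "x \<in> (\<lambda>i. w ^ i) ` {..<k'}" by (rule image_eqI)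
    qed
    hence "card (UNIV - {0::'a}) \<le> card ((\<lambda>i. w ^ i) ` {..<k'})" by (intro card_mono) auto
    also have "\<dots> \<le> k'" using card_image_le[of "{..<k'}" "\<lambda>i. w ^ i"] by simp
    finally show False using k'N by (simp add: card_Diff_singleton)
  qed
next
  assume "card (UNIV :: 'a set) - 1 dvd k"
  then obtain d where "k = (card (UNIV :: 'a set) - 1) * d" by auto
  thus "w ^ k = 1" using power_card_minus1[OF w0] by (simp only: power_mult) simp
qed

locale nums =
  fixes r q e1 f1 e2 f2 l s t :: nat
  assumes r_pp: "prime_power r" and r_odd: "odd r"
    and q_def: "q = r ^ 2"
    and pos: "e1 > 0" "f1 > 0" "e2 > 0" "f2 > 0"
    and fac1: "q - 1 = e1 * f1" and fac2: "q - 1 = e2 * f2"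
    and l2: "l \<ge> 2"
    and e1_cong: "e1 mod 2 ^ (l + 1) = 2 ^ l"
    and e2_dvd: "2 ^ l dvd e2"
    and div1: "2 * e2 dvd e1 * (r + 1)"
    and div2: "e1 dvd e2 * (r - 1)"
    and s_range: "1 \<le> s" "s \<le> e1 div gcd e1 e2"
    and t_range: "1 \<le> t" "t \<le> e2 div gcd e1 e2"
  fixes Nq hq Qq gq mq D1 D2 T0 :: nat
  assumes Nq_def: "Nq = q - 1" and hq_def: "hq = (r + 1) div 2" and Qq_def: "Qq = Nq div 2"
    and gq_def: "gq = gcd e1 e2" and mq_def: "mq = e1 div 2" and D1_def: "D1 = e1 div gq"
    and D2_def: "D2 = e2 div gq" and T0_def: "T0 = e1 * (r + 1) div (2 * e2)"
begin



lemma r3: "r \<ge> 3"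
proof -
  obtain p k where "prime p" "k \<ge> 1" "r = p ^ k" using r_pp by (auto simp: prime_power_def)
  hence "r \<ge> 2"
    by (metis One_nat_def le_trans power_one_right power_increasing prime_ge_2_nat prime_gt_0_nat Suc_leI)
  thus ?thesis using r_odd by presburger
qed

lemma r_h: "r + 1 = 2 * hq" using r_odd by (simp add: hq_def)
lemma rm1: "r - 1 = 2 * (hq - 1)" using r_h r3 by simp
lemma N_eq: "Nq = (r - 1) * (r + 1)"
proof -
  obtain r' where "r = Suc r'" using r3 by (cases r) auto
  thus ?thesis unfolding Nq_def q_def by (simp add: power2_eq_square algebra_simps)
qed
lemma Q_eq: "Qq = (r - 1) * hq" unfolding Qq_def N_eq r_h by simp
lemma N_Q: "Nq = 2 * Qq" unfolding Q_eq N_eq r_h by simp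
lemma Q_even: "even Qq" unfolding Q_eq rm1 by simp
lemma h_pos: "hq \<ge> 2" using r3 r_h by simp
lemma Q_pos: "Qq > 0" using Q_eq r3 h_pos by simp
lemma N_pos: "Nq > 0" using N_Q Q_pos by simp
lemma fac1': "e1 * f1 = Nq" and fac2': "e2 * f2 = Nq" using fac1 fac2 by (auto simp: Nq_def)

lemma e1_decomp: "e1 = 2 ^ (l + 1) * (e1 div 2 ^ (l + 1)) + 2 ^ l"
  using e1_cong by (metis div_mult_mod_eq mult.commute)
lemma pl_dvd_e1: "2 ^ l dvd e1"
proof -
  have "2 ^ l dvd 2 ^ (l + 1) * (e1 div 2 ^ (l + 1)) + 2 ^ l" by (intro dvd_add) (auto simp: power_add)
  thus ?thesis by (subst e1_decomp)
qed
lemma four_dvd: "4 dvd (2::nat) ^ l"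
proof -
  have "(2::nat) ^ 2 dvd 2 ^ l" using l2 by (intro le_imp_power_dvd)
  thus ?thesis by simp
qed
lemma e1_m: "e1 = 2 * mq" and m_even: "even mq"
proof -
  have "4 dvd e1" using four_dvd pl_dvd_e1 by (rule dvd_trans)
  then obtain u where "e1 = 4 * u" by auto
  thus "e1 = 2 * mq" "even mq" unfolding mq_def by auto
qed
lemma not_pl1_dvd_e1: "\<not> 2 ^ (l + 1) dvd e1"
proof
  assume "2 ^ (l + 1) dvd e1"
  hence "e1 mod 2 ^ (l + 1) = 0" by simp
  thus False using e1_cong by simp
qed
lemma pl_dvd_g: "2 ^ l dvd gq" unfolding gq_def using pl_dvd_e1 e2_dvd by simp
lemma g_pos: "gq > 0" using pos by (simp add: gq_def)
lemma g_even: "even gq"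
proof -
  have "2 dvd (2::nat) ^ l" using l2 by simp
  thus ?thesis using pl_dvd_g by (rule dvd_trans)
qed
lemma e2_even: "even e2"
proof -
  have "2 dvd (2::nat) ^ l" using l2 by simp
  thus ?thesis using e2_dvd by (rule dvd_trans)
qed
lemma g_not_dvd_m: "\<not> gq dvd mq"
proof
  assume "gq dvd mq"
  hence "2 ^ l dvd mq" using pl_dvd_g by (rule dvd_trans[rotated])
  hence "2 ^ (l + 1) dvd 2 * mq" by (simp add: power_add mult.commute)
  thus False using not_pl1_dvd_e1 e1_m by simp
qed
lemma D1g: "e1 = D1 * gq" and D2g: "e2 = D2 * gq"
  unfolding D1_def D2_def gq_def by simp_all
lemma cop: "coprime D1 D2" unfolding D1_def D2_def gq_def using pos by (intro div_gcd_coprime) auto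
lemma D1_odd: "odd D1"
proof
  assume "even D1"
  hence "2 * 2 ^ l dvd D1 * gq" using pl_dvd_g by (intro mult_dvd_mono) auto
  thus False using not_pl1_dvd_e1 D1g by (simp add: power_add mult.commute)
qed
lemma D1_dvd: "D1 dvd r - 1"
proof -
  have eq: "(D2 * (r - 1)) * gq = e2 * (r - 1)" by (simp add: D2g mult_ac)
  have "D1 * gq dvd (D2 * (r - 1)) * gq" unfolding eq D1g[symmetric] by (rule div2)
  hence "D1 dvd D2 * (r - 1)" using g_pos by simp
  thus ?thesis using cop by (simp add: coprime_dvd_mult_right_iff)
qed
lemma D2_dvd: "D2 dvd hq"
proof -
  have eq: "(D1 * (r + 1)) * gq = e1 * (r + 1)" "(2 * D2) * gq = 2 * e2" by (simp_all add: D1g D2g algebra_simps)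
  have "(2 * D2) * gq dvd (D1 * (r + 1)) * gq" unfolding eq by (rule div1)
  hence "2 * D2 dvd D1 * (r + 1)" using g_pos by simp
  moreover have "coprime (2 * D2) D1" using cop D1_odd by (simp add: coprime_commute)
  ultimately have "2 * D2 dvd r + 1" using coprime_dvd_mult_left_iff[of "2 * D2" D1 "r + 1"] by (simp add: mult.commute)
  thus ?thesis unfolding r_h by simp
qed
lemma T0_eq: "2 * e2 * T0 = e1 * (r + 1)" using div1 by (simp add: T0_def)

lemma F1: "Nq dvd gq * f1 * (r - 1)"
proof -
  obtain u where "r - 1 = D1 * u" using D1_dvd by auto
  hence "gq * f1 * (r - 1) = Nq * u" using fac1' D1g by (simp add: mult_ac)
  thus ?thesis by simp
qed
lemma F2: "Nq dvd gq * f2 * hq"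
proof -
  obtain u where "hq = D2 * u" using D2_dvd by auto
  hence "gq * f2 * hq = Nq * u" using fac2' D2g by (simp add: mult_ac)
  thus ?thesis by simp
qed
lemma F3: "e1 * f2 * hq = T0 * Nq"
proof -
  have "(e1 * f2 * hq) * (2 * e2) = (T0 * Nq) * (2 * e2)"
  proof -
    have "(e1 * f2 * hq) * (2 * e2) = e1 * (r + 1) * (e2 * f2)" using r_h by (simp add: mult_ac)
    also have "\<dots> = 2 * e2 * T0 * Nq" using T0_eq fac2' by simp
    finally show ?thesis by (simp add: mult_ac)
  qed
  thus ?thesis using pos by simp
qed
lemma F4: "mq * f2 * hq = Qq * T0"
proof -
  have "2 * (mq * f2 * hq) = 2 * (Qq * T0)" using F3 e1_m N_Q by (simp add: mult_ac)
  thus ?thesis by simp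
qed
lemma F6: "Nq dvd e2 * f1 * (r - 1)"
proof -
  obtain u where "e2 * (r - 1) = e1 * u" using div2 by auto
  hence "e2 * f1 * (r - 1) = Nq * u" using fac1' by (metis mult.assoc mult.commute)
  thus ?thesis by simp
qed
lemma F7a: "mq * f1 = Qq"
proof -
  have "2 * (mq * f1) = e1 * f1" by (simp add: e1_m)
  hence "2 * (mq * f1) = 2 * Qq" using fac1' N_Q by simp
  thus ?thesis by simp
qed
lemma F7: "Nq dvd Qq * (r - 1)"
proof -
  have "Qq * (r - 1) = Nq * (hq - 1)" unfolding rm1 N_Q by simp
  thus ?thesis by simp
qed

lemma T0_t: "t * e1 * (r + 1) div (2 * e2) = t * T0"
proof -
  have "t * e1 * (r + 1) = t * (e1 * (r + 1))" by (simp add: algebra_simps)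
  also have "\<dots> = (t * T0) * (2 * e2)" unfolding T0_eq[symmetric] by (simp add: mult_ac)
  finally have "t * e1 * (r + 1) = (t * T0) * (2 * e2)" .
  thus ?thesis using pos by simp
qed
lemma h_t: "t * (r + 1) div 2 = t * hq" "(t - 1) * (r + 1) div 2 = (t - 1) * hq" "(r + 1) div 2 = hq"
  using r_h by simp_all

end

locale fsetup = nums +
  fixes w :: "'a::{field,finite}"
  assumes field_card: "card (UNIV :: 'a set) = q" and gen: "\<forall>x. x \<noteq> 0 \<longrightarrow> (\<exists>i. x = w ^ i)"
    and w0: "w \<noteq> 0"
begin

lemma wpow1: "w ^ k = 1 \<longleftrightarrow> Nq dvd k"
  using gen_order[OF w0 gen, of k] field_card Nq_def by simp

lemma w_eq: "w ^ a = w ^ b \<longleftrightarrow> [a = b] (mod Nq)"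
proof -
  have *: "w ^ a = w ^ b \<longleftrightarrow> [a = b] (mod Nq)" if ab: "a \<le> b" for a b
  proof -
    have "w ^ b = w ^ a * w ^ (b - a)" using ab by (simp flip: power_add)
    hence "w ^ a = w ^ b \<longleftrightarrow> w ^ (b - a) = 1" using w0 by auto
    also have "\<dots> \<longleftrightarrow> Nq dvd b - a" by (rule wpow1)
    also have "\<dots> \<longleftrightarrow> [b = a] (mod Nq)" using ab by (simp add: cong_altdef_nat)
    finally show ?thesis by (simp add: cong_sym_eq)
  qed
  show ?thesis
  proof (cases "a \<le> b")
    case True thus ?thesis by (rule *)
  next
    case False thus ?thesis using *[of b a] by (auto simp: cong_sym_eq)
  qed
qed

lemma wQ: "w ^ Qq = -1"
proof -
  have "(w ^ Qq) ^ 2 = 1" using wpow1 N_Q by (simp flip: power_mult add: mult.commute)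
  hence "(w ^ Qq - 1) * (w ^ Qq + 1) = 0" by (simp add: algebra_simps power2_eq_square)
  moreover have "w ^ Qq \<noteq> 1"
  proof
    assume "w ^ Qq = 1"
    hence "Nq dvd Qq" using wpow1 by simp
    thus False using N_Q Q_pos by (auto dest: dvd_imp_le)
  qed
  ultimately show ?thesis by (simp add: eq_neg_iff_add_eq_0)
qed

lemma char_facts: "prime (semiring_char TYPE('a))" "\<exists>k. r = semiring_char TYPE('a) ^ k"
proof -
  have cp: "semiring_char TYPE('a) > 0" by (rule finite_imp_CHAR_pos) simp
  show pr: "prime (semiring_char TYPE('a))" by (rule prime_CHAR_semidom[OF cp])
  obtain p k where pk: "prime p" "k \<ge> 1" "r = p ^ k" using r_pp by (auto simp: prime_power_def)
  have "semiring_char TYPE('a) dvd card (UNIV :: 'a set)" by (rule CHAR_dvd_CARD)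
  hence "semiring_char TYPE('a) dvd p ^ (k * 2)" using field_card q_def pk by (simp add: power_mult)
  hence "semiring_char TYPE('a) dvd p" by (rule prime_dvd_power[OF pr])
  hence "semiring_char TYPE('a) = p" using pr pk by (intro primes_dvd_imp_eq)
  thus "\<exists>k. r = semiring_char TYPE('a) ^ k" using pk by auto
qed

lemma frob: "(x + y :: 'a) ^ r = x ^ r + y ^ r"
proof -
  obtain k where "r = semiring_char TYPE('a) ^ k" using char_facts by auto
  thus ?thesis using char_facts(1) by (intro freshmans_dream') auto
qed

lemma frob_diff: "(x - y :: 'a) ^ r = x ^ r - y ^ r"
proof -
  have "x ^ r = ((x - y) + y) ^ r" by simp
  also have "\<dots> = (x - y) ^ r + y ^ r" by (rule frob)
  finally show ?thesis by simp
qed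

lemma of_nat_frob: "(of_nat n :: 'a) ^ r = of_nat n"
proof (induction n)
  case 0 thus ?case using r3 by simp
next
  case (Suc n)
  have "(of_nat (Suc n) :: 'a) ^ r = (of_nat n + 1) ^ r" by (simp add: add.commute)
  also have "\<dots> = of_nat n + 1" using frob[of "of_nat n" 1] Suc by simp
  finally show ?case by (simp add: add.commute)
qed

lemma E1: assumes "z \<noteq> 0" "z ^ r = (z :: 'a)" shows "z ^ Qq = 1"
proof -
  have "z ^ (r - 1) * z = z ^ r" using r3 by (simp flip: power_Suc2)
  hence "z ^ (r - 1) = 1" using assms by simp
  thus ?thesis unfolding Q_eq by (simp add: power_mult)
qed

lemma E2: assumes "f dvd Nq" shows "(of_nat f :: 'a) \<noteq> 0" "(of_nat f :: 'a) ^ Qq = 1"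
proof -
  show nz: "(of_nat f :: 'a) \<noteq> 0"
  proof
    assume "(of_nat f :: 'a) = 0"
    hence "semiring_char TYPE('a) dvd f" by (simp add: of_nat_eq_0_iff_char_dvd)
    hence d: "semiring_char TYPE('a) dvd Nq" using assms by (rule dvd_trans)
    obtain k where k: "r = semiring_char TYPE('a) ^ k" using char_facts by auto
    have "k \<noteq> 0" using k r3 by (cases k) auto
    hence d2: "semiring_char TYPE('a) dvd r" using k by simp
    hence "semiring_char TYPE('a) dvd r * r" by simp
    moreover have "Nq + 1 = r * r" using N_eq r3 by (simp add: algebra_simps)
    ultimately have "semiring_char TYPE('a) dvd 1" using d by (metis dvd_add_right_iff)
    thus False using char_facts(1) by simp
  qed
  show "(of_nat f :: 'a) ^ Qq = 1" by (rule E1[OF nz of_nat_frob])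
qed

lemma E3: "even k \<Longrightarrow> (w ^ k) ^ Qq = 1"
  by (auto simp: wpow1 N_Q simp flip: power_mult elim!: evenE)

lemma E4: assumes "z \<noteq> 0" "z ^ Qq = (1::'a)" shows "\<exists>y. y ^ 2 = z"
proof -
  obtain i where i: "z = w ^ i" using gen assms by auto
  hence "Nq dvd i * Qq" using assms wpow1 by (simp flip: power_mult)
  hence "2 * Qq dvd i * Qq" using N_Q by simp
  hence "2 dvd i" using Q_pos by (simp add: mult.commute)
  then obtain j where "i = 2 * j" by auto
  hence "(w ^ j) ^ 2 = z" using i by (simp flip: power_mult add: mult.commute)
  thus ?thesis by blast
qed

lemma neg1: "(-1::'a) ^ Qq = 1" using Q_even by simp

lemma E5: assumes x: "x ^ (r + 1) = 1" and y: "y ^ (r + 1) = (1::'a)" and xy: "x \<noteq> y"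
  shows "(x - y) ^ Qq = (-1) ^ hq * (x * y) ^ hq"
proof -
  have x0: "x \<noteq> 0" and y0: "y \<noteq> 0" using x y r3 by auto
  have xr: "x ^ r * x = 1" using x by (simp flip: power_Suc2)
  have yr: "y ^ r * y = 1" using y by (simp flip: power_Suc2)
  have "(x - y) ^ r * (x * y) = (x ^ r * x) * y - (y ^ r * y) * x" by (simp add: frob_diff algebra_simps)
  also have "\<dots> = - (x - y)" using xr yr by simp
  finally have "(x - y) ^ (r - 1) * (x - y) * (x * y) = - (x - y)"
    using r3 by (simp flip: power_Suc2)
  hence "(x - y) * ((x - y) ^ (r - 1) * (x * y)) = (x - y) * (-1)" by (simp add: algebra_simps)
  hence A: "(x - y) ^ (r - 1) * (x * y) = -1" using xy by (subst (asm) mult_cancel_left) simp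
  have "((x - y) ^ (r - 1) * (x * y)) ^ hq = (-1) ^ hq" using A by simp
  hence B: "(x - y) ^ Qq * (x * y) ^ hq = (-1) ^ hq" unfolding Q_eq by (simp add: power_mult_distrib power_mult)
  have C: "(x * y) ^ hq * (x * y) ^ hq = 1"
  proof -
    have "(x * y) ^ hq * (x * y) ^ hq = (x * y) ^ (r + 1)" using r_h by (simp flip: power_add add: mult_2)
    also have "\<dots> = x ^ (r + 1) * y ^ (r + 1)" by (rule power_mult_distrib)
    finally show ?thesis using x y by simp
  qed
  have "(x - y) ^ Qq = (x - y) ^ Qq * ((x * y) ^ hq * (x * y) ^ hq)" using C by simp
  also have "\<dots> = (-1) ^ hq * (x * y) ^ hq" using B by (simp add: mult.assoc[symmetric])
  finally show ?thesis .
qed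

end

lemma const_pow: "[:a:] ^ n = [:(a::'a::comm_ring_1) ^ n:]"
  by (induction n) (auto simp: one_pCons)

lemma rootprod:
  fixes S :: "'a::field set"
  assumes fin: "finite S" and card: "card S = f" and f1: "f \<ge> 1" and roots: "\<forall>b\<in>S. b ^ f = y"
  shows "(\<Prod>b\<in>S. [:-b, 1:]) = [:0, 1:] ^ f - [:y:]"
proof -
  let ?p = "\<Prod>b\<in>S. [:-b, 1:]"
  let ?P = "[:0, 1:] ^ f - [:y:] :: 'a poly"
  have dp: "degree ?p = f" using card by (subst degree_prod_sum_eq) auto
  have lp: "coeff ?p f = 1" using lead_coeff_prod[of "\<lambda>b. [:-b, 1:]" S] dp by simp
  have dX: "degree ([:0, 1:] ^ f :: 'a poly) = f" using degree_linear_power[of 0 f] by simp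
  have lX: "coeff ([:0, 1:] ^ f :: 'a poly) f = 1" using lead_coeff_power[of "[:0, 1::'a:]" f] dX by simp
  have dP: "degree ?P \<le> f" using dX f1 by (intro degree_diff_le) auto
  have "coeff [:y:] f = 0" using f1 by (cases f) auto
  hence cP: "coeff ?P f = 1" using lX by simp
  let ?d = "?p - ?P"
  have dd: "degree ?d \<le> f" by (rule degree_diff_le[OF _ dP]) (simp add: dp)
  have cd: "coeff ?d f = 0" using lp cP by simp
  have rt: "\<forall>b\<in>S. poly ?d b = 0"
  proof
    fix b assume b: "b \<in> S"
    have "poly ?p b = 0" unfolding poly_prod using b fin by (auto intro: prod_zero)
    moreover have "poly ?P b = 0" using roots b by simp
    ultimately show "poly ?d b = 0" by simp
  qed
  have "?d = 0"
  proof (rule ccontr)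
    assume nz: "?d \<noteq> 0"
    hence "degree ?d \<noteq> f" using cd by (metis leading_coeff_0_iff)
    hence "degree ?d < f" using dd by simp
    moreover have "card S \<le> card {x. poly ?d x = 0}"
      using rt by (intro card_mono poly_roots_finite nz) auto
    moreover have "card {x. poly ?d x = 0} \<le> degree ?d" by (rule card_poly_roots_bound[OF nz])
    ultimately show False using card by simp
  qed
  thus ?thesis by simp
qed

lemma rootprod_eval:
  fixes S :: "'a::field set"
  assumes "finite S" "card S = f" "f \<ge> 1" "\<forall>b\<in>S. b ^ f = y"
  shows "(\<Prod>b\<in>S. (x - b)) = x ^ f - y"
proof -
  have "poly (\<Prod>b\<in>S. [:-b, 1:]) x = poly ([:0, 1:] ^ f - [:y:]) x" by (simp only: rootprod[OF assms])
  thus ?thesis by (simp add: poly_prod)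
qed

lemma rootprod_deriv:
  fixes S :: "'a::field set"
  assumes fin: "finite S" and card: "card S = f" and f1: "f \<ge> 1" and roots: "\<forall>b\<in>S. b ^ f = y"
    and a: "a \<in> S"
  shows "(\<Prod>b\<in>S-{a}. (a - b)) = of_nat f * a ^ (f - 1)"
proof -
  let ?p' = "\<Prod>b\<in>S-{a}. [:-b, 1:]"
  let ?R = "\<Sum>i<f. [:a:] ^ (f - Suc i) * [:0, 1:] ^ i :: 'a poly"
  have ya: "y = a ^ f" using roots a by simp
  have "[:-a, 1:] * ?p' = (\<Prod>b\<in>S. [:-b, 1:])"
    using a fin by (simp add: prod.remove)
  also have "\<dots> = [:0, 1:] ^ f - [:a:] ^ f" unfolding rootprod[OF fin card f1 roots] ya const_pow ..
  also have "\<dots> = ([:0, 1:] - [:a:]) * ?R" by (rule power_diff_sumr2)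
  also have "[:0, 1:] - [:a:] = [:-a, 1::'a:]" by simp
  finally have pR: "?p' = ?R" by (subst (asm) mult_cancel_left) simp
  have "(\<Prod>b\<in>S-{a}. (a - b)) = poly ?p' a" by (simp add: poly_prod)
  also have "\<dots> = poly ?R a" by (simp only: pR)
  also have "\<dots> = (\<Sum>i<f. a ^ (f - Suc i) * a ^ i)" by (simp add: poly_sum)
  also have "\<dots> = (\<Sum>i<f. a ^ (f - 1))"
  proof (rule sum.cong[OF refl])
    fix i assume "i \<in> {..<f}"
    hence "f - Suc i + i = f - 1" by auto
    thus "a ^ (f - Suc i) * a ^ i = a ^ (f - 1)" by (metis power_add)
  qed
  also have "\<dots> = of_nat f * a ^ (f - 1)" by simp
  finally show ?thesis .
qed

lemma cong_scale: "0 < (e::nat) \<Longrightarrow> [e * x = e * y] (mod e * f) \<longleftrightarrow> [x = y] (mod f)"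
  by (simp add: cong_def mod_mult_mult1)

definition cos :: "'a::field \<Rightarrow> nat \<Rightarrow> nat \<Rightarrow> nat \<Rightarrow> 'a set" where
  "cos w c e f = (\<lambda>j. w ^ (c + e * j)) ` {..<f}"


context fsetup
begin

lemma gq_dvd: "gq dvd e1" "gq dvd e2" "gq dvd Nq"
proof -
  show "gq dvd e1" "gq dvd e2" by (simp_all add: gq_def)
  thus "gq dvd Nq" using fac1' by (metis dvd_mult2)
qed

lemma D1_ge_s: "s \<le> D1" and D2_ge_t: "t \<le> D2"
  using s_range t_range by (simp_all add: D1_def D2_def gq_def)

lemma cos_mem: "b \<in> cos w c e f \<Longrightarrow> \<exists>j. b = w ^ (c + e * j)"
  by (auto simp: cos_def)

lemma cos_facts:
  assumes ef: "e * f = Nq"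
  shows "finite (cos w c e f)" "card (cos w c e f) = f" "\<forall>b\<in>cos w c e f. b ^ f = w ^ (c * f)"
proof -
  show "finite (cos w c e f)" by (simp add: cos_def)
  have e0: "e > 0" using ef N_pos by (cases e) auto
  have "inj_on (\<lambda>j. w ^ (c + e * j)) {..<f}"
  proof
    fix j j' assume jj: "j \<in> {..<f}" "j' \<in> {..<f}" and eq: "w ^ (c + e * j) = w ^ (c + e * j')"
    hence "[c + e * j = c + e * j'] (mod e * f)" using w_eq ef by simp
    hence "[e * j = e * j'] (mod e * f)" by (simp add: cong_add_lcancel_nat)
    hence "[j = j'] (mod f)" using cong_scale[OF e0] by simp
    thus "j = j'" using jj by (simp add: cong_def)
  qed
  thus "card (cos w c e f) = f" by (simp add: cos_def card_image)
  show "\<forall>b\<in>cos w c e f. b ^ f = w ^ (c * f)"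
  proof
    fix b assume "b \<in> cos w c e f"
    then obtain j where b: "b = w ^ (c + e * j)" using cos_mem by blast
    have "b ^ f = w ^ (c * f) * (w ^ (e * f)) ^ j"
      unfolding b by (simp flip: power_mult power_add add: algebra_simps)
    also have "w ^ (e * f) = 1" using ef wpow1 by simp
    finally show "b ^ f = w ^ (c * f)" by simp
  qed
qed

lemma cos_prod: "e * f = Nq \<Longrightarrow> f \<ge> 1 \<Longrightarrow> (\<Prod>b\<in>cos w c e f. (x - b)) = x ^ f - w ^ (c * f)"
  using cos_facts by (intro rootprod_eval) auto

lemma cos_deriv: "e * f = Nq \<Longrightarrow> f \<ge> 1 \<Longrightarrow> a \<in> cos w c e f \<Longrightarrow>
    (\<Prod>b\<in>cos w c e f - {a}. (a - b)) = of_nat f * a ^ (f - 1)"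
  using cos_facts by (intro rootprod_deriv) auto

lemma modg: assumes "gq dvd x" "gq dvd y" "[x = mq + y] (mod gq)" shows False
proof -
  have "x mod gq = 0" using assms(1) by simp
  moreover have "(mq + y) mod gq = mq mod gq" using assms(2) by (auto elim!: dvdE)
  ultimately have "mq mod gq = 0" using assms(3) by (simp add: cong_def)
  thus False using g_not_dvd_m by (simp add: mod_eq_0_iff_dvd)
qed

lemma G1: assumes "i < s" "i' < s" "w ^ (gq * i * f1) = w ^ (gq * i' * f1)" shows "i = i'"
proof -
  have "Nq = (gq * f1) * D1" using fac1' D1g by (simp add: mult_ac)
  hence "[(gq * f1) * i = (gq * f1) * i'] (mod (gq * f1) * D1)" using assms(3) w_eq by (simp add: mult_ac)
  hence "[i = i'] (mod D1)" using g_pos pos by (subst (asm) cong_scale) auto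
  thus ?thesis using assms D1_ge_s by (simp add: cong_def)
qed

lemma G2: assumes "i < t" "i' < t" "w ^ ((mq + gq * i) * f2) = w ^ ((mq + gq * i') * f2)" shows "i = i'"
proof -
  have "Nq = (gq * f2) * D2" using fac2' D2g by (simp add: mult_ac)
  hence "[mq * f2 + (gq * f2) * i = mq * f2 + (gq * f2) * i'] (mod (gq * f2) * D2)"
    using assms(3) w_eq by (simp add: algebra_simps)
  hence "[(gq * f2) * i = (gq * f2) * i'] (mod (gq * f2) * D2)" by (simp add: cong_add_lcancel_nat)
  hence "[i = i'] (mod D2)" using g_pos pos by (subst (asm) cong_scale) auto
  thus ?thesis using assms D2_ge_t by (simp add: cong_def)
qed

lemma G4: "w ^ ((gq * i0 + e1 * j) * f2) \<noteq> w ^ ((mq + gq * i) * f2)"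
proof
  assume "w ^ ((gq * i0 + e1 * j) * f2) = w ^ ((mq + gq * i) * f2)"
  hence "[f2 * (gq * i0 + e1 * j) = f2 * (mq + gq * i)] (mod f2 * e2)"
    using w_eq fac2' by (simp add: mult_ac)
  hence "[gq * i0 + e1 * j = mq + gq * i] (mod e2)" using pos by (subst (asm) cong_scale) auto
  hence "[gq * i0 + e1 * j = mq + gq * i] (mod gq)" using gq_dvd by (auto intro: cong_dvd_modulus_nat)
  thus False by (rule modg[rotated 2]) (use gq_dvd in auto)
qed

lemma G5: "w ^ ((mq + gq * i0 + e2 * j) * f1) \<noteq> w ^ (gq * i * f1)"
proof
  assume "w ^ ((mq + gq * i0 + e2 * j) * f1) = w ^ (gq * i * f1)"
  hence "[f1 * (gq * i) = f1 * (mq + (gq * i0 + e2 * j))] (mod f1 * e1)"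
    using w_eq fac1' by (simp add: mult_ac cong_sym_eq add.assoc)
  hence "[gq * i = mq + (gq * i0 + e2 * j)] (mod e1)" using pos by (subst (asm) cong_scale) auto
  hence "[gq * i = mq + (gq * i0 + e2 * j)] (mod gq)" using gq_dvd by (auto intro: cong_dvd_modulus_nat)
  thus False by (rule modg[rotated 2]) (use gq_dvd in auto)
qed

lemma D12: "w ^ (gq * i + e1 * j) \<noteq> w ^ (mq + gq * i' + e2 * j')"
proof
  assume "w ^ (gq * i + e1 * j) = w ^ (mq + gq * i' + e2 * j')"
  hence "[gq * i + e1 * j = mq + (gq * i' + e2 * j')] (mod Nq)" using w_eq by (simp add: add.assoc)
  hence "[gq * i + e1 * j = mq + (gq * i' + e2 * j')] (mod gq)" using gq_dvd by (auto intro: cong_dvd_modulus_nat)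
  thus False by (rule modg[rotated 2]) (use gq_dvd in auto)
qed


abbreviation "C1 i \<equiv> cos w (gq * i) e1 f1"
abbreviation "C2 i \<equiv> cos w (mq + gq * i) e2 f2"
abbreviation "A1 \<equiv> (\<Union>i\<in>{..<s}. C1 i)"
abbreviation "A2 \<equiv> (\<Union>i\<in>{..<t}. C2 i)"
abbreviation "AA \<equiv> A1 \<union> A2"

lemma C1f: "finite (C1 i)" "card (C1 i) = f1" "\<forall>b\<in>C1 i. b ^ f1 = w ^ (gq * i * f1)"
  using cos_facts[OF fac1', of "gq * i"] by auto
lemma C2f: "finite (C2 i)" "card (C2 i) = f2" "\<forall>b\<in>C2 i. b ^ f2 = w ^ ((mq + gq * i) * f2)"
  using cos_facts[OF fac2', of "mq + gq * i"] by auto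

lemma disj11: assumes "i < s" "i' < s" "i \<noteq> i'" shows "C1 i \<inter> C1 i' = {}"
proof (rule ccontr)
  assume "C1 i \<inter> C1 i' \<noteq> {}"
  then obtain b where "b \<in> C1 i" "b \<in> C1 i'" by blast
  hence "w ^ (gq * i * f1) = w ^ (gq * i' * f1)" using C1f(3) by metis
  thus False using G1 assms by blast
qed
lemma disj22: assumes "i < t" "i' < t" "i \<noteq> i'" shows "C2 i \<inter> C2 i' = {}"
proof (rule ccontr)
  assume "C2 i \<inter> C2 i' \<noteq> {}"
  then obtain b where "b \<in> C2 i" "b \<in> C2 i'" by blast
  hence "w ^ ((mq + gq * i) * f2) = w ^ ((mq + gq * i') * f2)" using C2f(3) by metis
  thus False using G2 assms by blast
qed
lemma disj12: "C1 i \<inter> C2 i' = {}"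
  using D12 by (auto simp: cos_def add.assoc)
lemma disjA: "A1 \<inter> A2 = {}" using disj12 by blast

lemma finA: "finite A1" "finite A2" using C1f C2f by auto

lemma cardA: "card AA = s * f1 + t * f2"
proof -
  have "card A1 = (\<Sum>i<s. card (C1 i))"
    by (rule card_UN_disjoint) (use C1f disj11 in auto)
  moreover have "card A2 = (\<Sum>i<t. card (C2 i))"
    by (rule card_UN_disjoint) (use C2f disj22 in auto)
  ultimately show ?thesis using card_Un_disjoint[OF finA disjA] C1f C2f by simp
qed

lemma A_exp: "z \<in> AA \<Longrightarrow> \<exists>k. even k \<and> z = w ^ k"
proof -
  assume "z \<in> AA"
  then consider (a) i j where "z = w ^ (gq * i + e1 * j)" | (b) i j where "z = w ^ (mq + gq * i + e2 * j)"
    by (auto simp: cos_def)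
  thus ?thesis
  proof cases
    case a thus ?thesis using g_even e1_m by (intro exI[of _ "gq * i + e1 * j"]) auto
  next
    case b thus ?thesis using g_even m_even e2_even by (intro exI[of _ "mq + gq * i + e2 * j"]) auto
  qed
qed

lemma A_eta: "z \<in> AA \<Longrightarrow> (z ^ n) ^ Qq = 1"
proof -
  assume "z \<in> AA"
  then obtain k where "even k" "z = w ^ k" using A_exp by blast
  thus ?thesis using E3[of "k * n"] by (simp add: power_mult)
qed

lemma A_nz: "z \<in> AA \<Longrightarrow> z \<noteq> 0"
  using A_exp w0 by fastforce

lemma fixpt: assumes "Nq dvd a * (r - 1)" shows "(w ^ a) ^ r = w ^ a"
proof -
  have "a * r - a = a * (r - 1)" by (simp add: diff_mult_distrib2)
  hence "[a * r = a] (mod Nq)" using assms r3 by (subst cong_altdef_nat) auto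
  thus ?thesis using w_eq by (simp flip: power_mult)
qed

lemma hpow: "Nq dvd a * hq \<Longrightarrow> (w ^ a) ^ hq = 1"
  using wpow1 by (simp flip: power_mult)

lemma rp1: "(z::'a) ^ (r + 1) = (z ^ hq) ^ 2"
  unfolding r_h by (simp add: power_mult mult.commute)

lemma E1': assumes "x \<noteq> y" "x ^ r = x" "y ^ r = (y::'a)" shows "(x - y) ^ Qq = 1"
  using assms by (intro E1) (simp_all add: frob_diff)

lemma E5': assumes "x ^ hq = a" "y ^ hq = b" "a ^ 2 = 1" "b ^ 2 = 1" "x \<noteq> (y::'a)"
  shows "(x - y) ^ Qq = (-1) ^ hq * a * b"
proof -
  have "x ^ (r + 1) = 1" using rp1[of x] assms(1,3) by simp
  moreover have "y ^ (r + 1) = 1" using rp1[of y] assms(2,4) by simp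
  ultimately have "x ^ (r + 1) = 1" "y ^ (r + 1) = 1" by auto
  from E5[OF this assms(5)] show ?thesis using assms(1,2) by (simp add: power_mult_distrib mult.assoc)
qed

lemma yhq: "(w ^ ((mq + gq * i) * f2)) ^ hq = (-1) ^ T0"
proof -
  have "(mq + gq * i) * f2 * hq = Qq * T0 + (gq * f2 * hq) * i" using F4 by (simp add: algebra_simps)
  hence "(w ^ ((mq + gq * i) * f2)) ^ hq = (w ^ Qq) ^ T0 * (w ^ (gq * f2 * hq)) ^ i"
    by (simp flip: power_mult power_add)
  also have "w ^ (gq * f2 * hq) = 1" using F2 wpow1 by simp
  finally show ?thesis using wQ by simp
qed

lemma prodsplit:
  assumes "finite X" "finite Y" "finite Z" "X \<inter> Y = {}" "X \<inter> Z = {}" "Y \<inter> Z = {}"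
  shows "(\<Prod>y\<in>X \<union> (Y \<union> Z). g y) = prod g X * (prod g Y * prod g Z)"
  using assms by (simp add: prod.union_disjoint Int_Un_distrib)

lemma eta_A1: assumes i0: "i0 < s" and z: "z \<in> C1 i0"
  shows "(\<Prod>y\<in>AA-{z}. (z - y)) ^ Qq = ((-1) ^ hq * (-1) ^ T0 :: 'a) ^ t"
proof -
  obtain j where zj: "z = w ^ (gq * i0 + e1 * j)" using z cos_mem by blast
  define R where "R = (\<Union>i\<in>{..<s}-{i0}. C1 i)"
  have AR: "A1 = C1 i0 \<union> R" using i0 unfolding R_def by auto
  have d1: "C1 i0 \<inter> R = {}" unfolding R_def using disj11 i0 by auto
  have d2: "C1 i0 \<inter> A2 = {}" and d3: "R \<inter> A2 = {}" using disj12 unfolding R_def by auto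
  have fR: "finite R" unfolding R_def using C1f by auto
  have split: "AA - {z} = (C1 i0 - {z}) \<union> (R \<union> A2)" using AR d1 d2 z by auto
  have P: "(\<Prod>y\<in>AA-{z}. (z - y)) = (\<Prod>y\<in>C1 i0 - {z}. (z - y)) * ((\<Prod>y\<in>R. (z - y)) * (\<Prod>y\<in>A2. (z - y)))"
    unfolding split by (rule prodsplit) (use C1f fR finA d1 d2 d3 in auto)
  have p1: "(\<Prod>y\<in>C1 i0 - {z}. (z - y)) = of_nat f1 * z ^ (f1 - 1)"
    using cos_deriv[OF fac1'] pos z by auto
  have zf1: "z ^ f1 = w ^ (gq * i0 * f1)" using C1f z by auto
  have zf2: "z ^ f2 = w ^ ((gq * i0 + e1 * j) * f2)" unfolding zj by (simp add: power_mult)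
  have p2: "(\<Prod>y\<in>R. (z - y)) = (\<Prod>i\<in>{..<s}-{i0}. (z ^ f1 - w ^ (gq * i * f1)))"
  proof -
    have "(\<Prod>y\<in>R. (z - y)) = (\<Prod>i\<in>{..<s}-{i0}. (\<Prod>y\<in>C1 i. (z - y)))"
      unfolding R_def by (rule prod.UNION_disjoint) (use C1f disj11 in auto)
    also have "\<dots> = (\<Prod>i\<in>{..<s}-{i0}. (z ^ f1 - w ^ (gq * i * f1)))"
      using cos_prod[OF fac1'] pos by simp
    finally show ?thesis .
  qed
  have p3: "(\<Prod>y\<in>A2. (z - y)) = (\<Prod>i<t. (z ^ f2 - w ^ ((mq + gq * i) * f2)))"
  proof -
    have "(\<Prod>y\<in>A2. (z - y)) = (\<Prod>i<t. (\<Prod>y\<in>C2 i. (z - y)))"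
      by (rule prod.UNION_disjoint) (use C2f disj22 in auto)
    also have "\<dots> = (\<Prod>i<t. (z ^ f2 - w ^ ((mq + gq * i) * f2)))"
      using cos_prod[OF fac2'] pos by simp
    finally show ?thesis .
  qed
  have zA: "z \<in> AA" using z i0 by auto
  have e1v: "(of_nat f1 * z ^ (f1 - 1) :: 'a) ^ Qq = 1"
  proof -
    have f1d: "f1 dvd Nq" using fac1' by (metis dvd_triv_right)
    have "(of_nat f1 :: 'a) ^ Qq = 1" by (rule E2(2)[OF f1d])
    moreover have "(z ^ (f1 - 1)) ^ Qq = 1" by (rule A_eta[OF zA])
    ultimately show ?thesis by (simp add: power_mult_distrib)
  qed
  have e2v: "(z ^ f1 - w ^ (gq * i * f1)) ^ Qq = 1" if i: "i \<in> {..<s}-{i0}" for i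
  proof -
    have ne: "w ^ (gq * i0 * f1) \<noteq> w ^ (gq * i * f1)" using G1[of i0 i] i i0 by auto
    have "(gq * i0 * f1) * (r - 1) = (gq * f1 * (r - 1)) * i0" "(gq * i * f1) * (r - 1) = (gq * f1 * (r - 1)) * i"
      by (simp_all add: mult_ac)
    hence "Nq dvd (gq * i0 * f1) * (r - 1)" "Nq dvd (gq * i * f1) * (r - 1)"
      using F1 by (metis dvd_mult2)+
    thus ?thesis unfolding zf1 using ne by (intro E1' fixpt) auto
  qed
  have e3v: "(z ^ f2 - w ^ ((mq + gq * i) * f2)) ^ Qq = (-1) ^ hq * (-1) ^ T0" for i
  proof -
    have "(gq * i0 + e1 * j) * f2 * hq = (gq * f2 * hq) * i0 + (e1 * f2 * hq) * j" by (simp add: algebra_simps)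
    also have "\<dots> = (gq * f2 * hq) * i0 + Nq * (T0 * j)" using F3 by (simp add: mult_ac)
    finally have "Nq dvd (gq * i0 + e1 * j) * f2 * hq" using F2 by (metis dvd_add dvd_mult2 dvd_triv_left)
    hence x1: "(z ^ f2) ^ hq = 1" unfolding zf2 by (rule hpow)
    have "(z ^ f2 - w ^ ((mq + gq * i) * f2)) ^ Qq = (-1) ^ hq * 1 * (-1) ^ T0"
      by (rule E5'[OF x1 yhq]) (simp_all add: zf2 G4 flip: power_mult)
    thus ?thesis by simp
  qed
  have "(\<Prod>y\<in>AA-{z}. (z - y)) ^ Qq = (of_nat f1 * z ^ (f1 - 1)) ^ Qq *
      ((\<Prod>i\<in>{..<s}-{i0}. (z ^ f1 - w ^ (gq * i * f1)) ^ Qq) *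
       (\<Prod>i<t. (z ^ f2 - w ^ ((mq + gq * i) * f2)) ^ Qq))"
    unfolding P p1 p2 p3 by (simp add: power_mult_distrib prod_power_distrib)
  also have "\<dots> = ((-1) ^ hq * (-1) ^ T0) ^ t" using e1v e2v e3v by simp
  finally show ?thesis .
qed


lemma eta_A2: assumes i0: "i0 < t" and z: "z \<in> C2 i0"
  shows "(\<Prod>y\<in>AA-{z}. (z - y)) ^ Qq = ((-1) ^ hq :: 'a) ^ (t - 1)"
proof -
  obtain j where zj: "z = w ^ (mq + gq * i0 + e2 * j)" using z cos_mem by (fastforce simp: add.assoc)
  define R where "R = (\<Union>i\<in>{..<t}-{i0}. C2 i)"
  have AR: "A2 = C2 i0 \<union> R" using i0 unfolding R_def by auto
  have d1: "C2 i0 \<inter> R = {}" unfolding R_def using disj22 i0 by auto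
  have d2: "C2 i0 \<inter> A1 = {}" and d3: "R \<inter> A1 = {}" using disj12 unfolding R_def by auto
  have fR: "finite R" unfolding R_def using C2f by auto
  have split: "AA - {z} = (C2 i0 - {z}) \<union> (R \<union> A1)" using AR d1 d2 z by auto
  have P: "(\<Prod>y\<in>AA-{z}. (z - y)) = (\<Prod>y\<in>C2 i0 - {z}. (z - y)) * ((\<Prod>y\<in>R. (z - y)) * (\<Prod>y\<in>A1. (z - y)))"
    unfolding split by (rule prodsplit) (use C2f fR finA d1 d2 d3 in auto)
  have p1: "(\<Prod>y\<in>C2 i0 - {z}. (z - y)) = of_nat f2 * z ^ (f2 - 1)"
    using cos_deriv[OF fac2'] pos z by auto
  have zf2: "z ^ f2 = w ^ ((mq + gq * i0) * f2)" using C2f z by auto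
  have zf1: "z ^ f1 = w ^ ((mq + gq * i0 + e2 * j) * f1)" unfolding zj by (simp add: power_mult)
  have p2: "(\<Prod>y\<in>R. (z - y)) = (\<Prod>i\<in>{..<t}-{i0}. (z ^ f2 - w ^ ((mq + gq * i) * f2)))"
  proof -
    have "(\<Prod>y\<in>R. (z - y)) = (\<Prod>i\<in>{..<t}-{i0}. (\<Prod>y\<in>C2 i. (z - y)))"
      unfolding R_def by (rule prod.UNION_disjoint) (use C2f disj22 in auto)
    also have "\<dots> = (\<Prod>i\<in>{..<t}-{i0}. (z ^ f2 - w ^ ((mq + gq * i) * f2)))"
      using cos_prod[OF fac2'] pos by simp
    finally show ?thesis .
  qed
  have p3: "(\<Prod>y\<in>A1. (z - y)) = (\<Prod>i<s. (z ^ f1 - w ^ (gq * i * f1)))"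
  proof -
    have "(\<Prod>y\<in>A1. (z - y)) = (\<Prod>i<s. (\<Prod>y\<in>C1 i. (z - y)))"
      by (rule prod.UNION_disjoint) (use C1f disj11 in auto)
    also have "\<dots> = (\<Prod>i<s. (z ^ f1 - w ^ (gq * i * f1)))"
      using cos_prod[OF fac1'] pos by simp
    finally show ?thesis .
  qed
  have zA: "z \<in> AA" using z i0 by auto
  have e1v: "(of_nat f2 * z ^ (f2 - 1) :: 'a) ^ Qq = 1"
  proof -
    have f2d: "f2 dvd Nq" using fac2' by (metis dvd_triv_right)
    have "(of_nat f2 :: 'a) ^ Qq = 1" by (rule E2(2)[OF f2d])
    moreover have "(z ^ (f2 - 1)) ^ Qq = 1" by (rule A_eta[OF zA])
    ultimately show ?thesis by (simp add: power_mult_distrib)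
  qed
  have e2v: "(z ^ f2 - w ^ ((mq + gq * i) * f2)) ^ Qq = (-1) ^ hq" if i: "i \<in> {..<t}-{i0}" for i
  proof -
    have ne: "w ^ ((mq + gq * i0) * f2) \<noteq> w ^ ((mq + gq * i) * f2)" using G2[of i0 i] i i0 by auto
    have "(z ^ f2 - w ^ ((mq + gq * i) * f2)) ^ Qq = (-1) ^ hq * (-1) ^ T0 * (-1) ^ T0"
      unfolding zf2 by (rule E5'[OF yhq yhq]) (simp_all add: ne flip: power_mult)
    moreover have "(-1::'a) ^ T0 * (-1) ^ T0 = 1" by (cases "even T0") auto
    ultimately show ?thesis by (simp add: mult.assoc)
  qed
  have e3v: "(z ^ f1 - w ^ (gq * i * f1)) ^ Qq = 1" for i
  proof -
    have ne: "w ^ ((mq + gq * i0 + e2 * j) * f1) \<noteq> w ^ (gq * i * f1)" by (rule G5)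
    have "(mq + gq * i0 + e2 * j) * f1 * (r - 1) = Qq * (r - 1) + (gq * f1 * (r - 1)) * i0 + (e2 * f1 * (r - 1)) * j"
      using F7a by (simp add: algebra_simps)
    hence d1: "Nq dvd (mq + gq * i0 + e2 * j) * f1 * (r - 1)" using F1 F6 F7 by (metis dvd_add dvd_mult2)
    have "(gq * i * f1) * (r - 1) = (gq * f1 * (r - 1)) * i" by (simp add: mult_ac)
    hence d2: "Nq dvd (gq * i * f1) * (r - 1)" using F1 by (metis dvd_mult2)
    show ?thesis unfolding zf1 using ne d1 d2 by (intro E1' fixpt) auto
  qed
  have "(\<Prod>y\<in>AA-{z}. (z - y)) ^ Qq = (of_nat f2 * z ^ (f2 - 1)) ^ Qq *
      ((\<Prod>i\<in>{..<t}-{i0}. (z ^ f2 - w ^ ((mq + gq * i) * f2)) ^ Qq) *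
       (\<Prod>i<s. (z ^ f1 - w ^ (gq * i * f1)) ^ Qq))"
    unfolding P p1 p2 p3 by (simp add: power_mult_distrib prod_power_distrib)
  also have "\<dots> = ((-1) ^ hq) ^ (t - 1)" using e1v e2v e3v i0 by (simp add: card_Diff_singleton)
  finally show ?thesis .
qed


lemma PS_nz: "z \<in> S \<Longrightarrow> finite S \<Longrightarrow> (\<Prod>y\<in>S-{z}. (z - y)) \<noteq> (0::'a)"
  by (simp add: prod_zero_iff)

lemma eta_AA:
  assumes z: "z \<in> AA"
  shows "(\<Prod>y\<in>AA-{z}. (z - y)) ^ Qq = ((-1) ^ hq * (-1) ^ T0 :: 'a) ^ t \<or>
         (\<Prod>y\<in>AA-{z}. (z - y)) ^ Qq = ((-1) ^ hq :: 'a) ^ (t - 1)"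
  using z eta_A1 eta_A2 by blast

lemma m1pow: "((-1) ^ a * (-1) ^ b :: 'a) ^ c = (-1) ^ ((a + b) * c)"
  by (simp add: power_add power_mult)

lemma m1pow2: "((-1) ^ a :: 'a) ^ c = (-1) ^ (a * c)"
  by (simp add: power_mult)

lemma case23_eta:
  assumes ev1: "even (t * T0 + t * hq)" and ev2: "even ((t - 1) * hq)" and z: "z \<in> AA"
  shows "(\<Prod>y\<in>AA-{z}. (z - y)) ^ Qq = 1"
proof -
  have a: "even ((hq + T0) * t)" using ev1 by (simp add: algebra_simps)
  have b: "even (hq * (t - 1))" using ev2 by (simp add: mult.commute)
  show ?thesis using eta_AA[OF z] a b unfolding m1pow m1pow2 by auto
qed

lemma case1_eta:
  assumes ev1: "even (t * T0 + hq)" and z: "z \<in> AA"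
  shows "(\<Prod>y\<in>AA-{z}. (z - y)) ^ Qq = (-1) ^ (hq * (t - 1))"
proof -
  have t1: "t \<ge> 1" using t_range by simp
  have "even ((hq + T0) * t) = even (hq * (t - 1))"
    using ev1 t1 by (auto simp: even_add even_mult_iff even_diff_nat)
  hence "(-1::'a) ^ ((hq + T0) * t) = (-1) ^ (hq * (t - 1))"
    by (simp add: minus_one_power_iff)
  thus ?thesis using eta_AA[OF z] unfolding m1pow m1pow2 by auto
qed

lemma n1_ge2: "s * f1 + t * f2 \<ge> 2"
proof -
  have "s * f1 \<ge> 1 * 1" by (rule mult_le_mono) (use s_range pos in auto)
  moreover have "t * f2 \<ge> 1 * 1" by (rule mult_le_mono) (use t_range pos in auto)
  ultimately show ?thesis by linarith
qed

lemma finAA: "finite AA" using finA by simp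

lemma case1: assumes "even (t * T0 + hq)" "even (s * f1 + t * f2)"
  shows "\<exists>C :: (nat \<Rightarrow> 'a) set. MDS_self_dual_code (s * f1 + t * f2) C"
proof -
  define c :: 'a where "c = (if (-1::'a) ^ (hq * (t - 1)) = 1 then 1 else w)"
  have c0: "c \<noteq> 0" using w0 by (simp add: c_def)
  have sq: "\<forall>b\<in>AA. \<exists>y. y ^ 2 = c * (\<Prod>z\<in>AA-{b}. (b - z))"
  proof
    fix b assume b: "b \<in> AA"
    have e: "(\<Prod>y\<in>AA-{b}. (b - y)) ^ Qq = (-1) ^ (hq * (t - 1))" by (rule case1_eta[OF assms(1) b])
    have "(c * (\<Prod>z\<in>AA-{b}. (b - z))) ^ Qq = 1"
    proof (cases "(-1::'a) ^ (hq * (t - 1)) = 1")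
      case True thus ?thesis using e by (simp add: c_def power_mult_distrib)
    next
      case False
      hence "(-1::'a) ^ (hq * (t - 1)) = -1" by (auto simp: minus_one_power_iff split: if_splits)
      thus ?thesis using e False wQ by (simp add: c_def power_mult_distrib)
    qed
    moreover have "c * (\<Prod>z\<in>AA-{b}. (b - z)) \<noteq> 0" using c0 PS_nz[OF b finAA] by simp
    ultimately show "\<exists>y. y ^ 2 = c * (\<Prod>z\<in>AA-{b}. (b - z))" using E4 by blast
  qed
  from assms(2) obtain k where k: "s * f1 + t * f2 = 2 * k" by (rule evenE)
  have "k \<ge> 1" using k n1_ge2 by simp
  thus ?thesis using sd_from_squares[OF cardA k _ c0 sq] by simp
qed

lemma case2: assumes "even (t * T0 + t * hq)" "even ((t - 1) * hq)" "odd (s * f1 + t * f2)"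
  shows "\<exists>C :: (nat \<Rightarrow> 'a) set. MDS_self_dual_code (s * f1 + t * f2 + 1) C"
proof -
  have sq: "\<forall>b\<in>AA. \<exists>y. y ^ 2 = - (\<Prod>z\<in>AA-{b}. (b - z))"
  proof
    fix b assume b: "b \<in> AA"
    have "(- (\<Prod>z\<in>AA-{b}. (b - z))) ^ Qq = 1"
      using case23_eta[OF assms(1,2) b] neg1 by (simp add: Q_even)
    moreover have "- (\<Prod>z\<in>AA-{b}. (b - z)) \<noteq> 0" using PS_nz[OF b finAA] by simp
    ultimately show "\<exists>y. y ^ 2 = - (\<Prod>z\<in>AA-{b}. (b - z))" using E4 by blast
  qed
  from assms(3) have "even (Suc (s * f1 + t * f2))" by simp
  then obtain k where k: "Suc (s * f1 + t * f2) = 2 * k" by (rule evenE)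
  have "k \<ge> 1" using k by simp
  thus ?thesis using sd_ext_from_squares[OF cardA k _ sq] by simp
qed

lemma case3: assumes "even (t * T0 + t * hq)" "even ((t - 1) * hq)" "even (s * f1 + t * f2)"
  shows "\<exists>C :: (nat \<Rightarrow> 'a) set. MDS_self_dual_code (s * f1 + t * f2 + 2) C"
proof -
  let ?S = "insert 0 AA"
  have n0: "0 \<notin> AA" using A_nz by blast
  have cS: "card ?S = Suc (s * f1 + t * f2)" using cardA n0 finAA by simp
  have e: "(\<Prod>y\<in>?S-{b}. (b - y)) ^ Qq = 1" if b: "b \<in> ?S" for b
  proof (cases "b = 0")
    case True
    hence "?S - {b} = AA" using n0 by auto
    hence "(\<Prod>y\<in>?S-{b}. (b - y)) ^ Qq = (\<Prod>y\<in>AA. ((-1) * y) ^ Qq)"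
      using True by (simp add: prod_power_distrib)
    also have "\<dots> = (\<Prod>y\<in>AA. 1)"
    proof (intro prod.cong refl)
      fix y assume "y \<in> AA"
      thus "((-1) * y) ^ Qq = 1" using A_eta[of y 1] neg1 by (simp only: power_mult_distrib) simp
    qed
    finally show ?thesis by simp
  next
    case False
    hence bA: "b \<in> AA" using b by simp
    have "?S - {b} = insert 0 (AA - {b})" using False by auto
    hence "(\<Prod>y\<in>?S-{b}. (b - y)) = b * (\<Prod>y\<in>AA-{b}. (b - y))" using n0 finAA by simp
    thus ?thesis using case23_eta[OF assms(1,2) bA] A_eta[OF bA, of 1] by (simp add: power_mult_distrib)
  qed
  have sq: "\<forall>b\<in>?S. \<exists>y. y ^ 2 = - (\<Prod>z\<in>?S-{b}. (b - z))"
  proof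
    fix b assume b: "b \<in> ?S"
    have "(- (\<Prod>z\<in>?S-{b}. (b - z))) ^ Qq = 1" using e[OF b] neg1 by (simp add: Q_even)
    moreover have "- (\<Prod>z\<in>?S-{b}. (b - z)) \<noteq> 0" using PS_nz[OF b] finAA by simp
    ultimately show "\<exists>y. y ^ 2 = - (\<Prod>z\<in>?S-{b}. (b - z))" using E4 by blast
  qed
  from assms(3) obtain k where k: "s * f1 + t * f2 = 2 * k" by (rule evenE)
  have k2: "Suc (Suc (s * f1 + t * f2)) = 2 * (k + 1)" using k by simp
  have "k + 1 \<ge> 1" by simp
  from sd_ext_from_squares[OF cS k2 this sq] show ?thesis by simp
qed

end


theorem theorem2:
  fixes r q e1 f1 e2 f2 l s t :: nat
  assumes field_card: "card (UNIV :: 'a set) = q"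
    and r_pp: "prime_power r" and r_odd: "odd r"
    and q_def: "q = r ^ 2"
    and pos: "e1 > 0" "f1 > 0" "e2 > 0" "f2 > 0"
    and fac1: "q - 1 = e1 * f1" and fac2: "q - 1 = e2 * f2"
    and l2: "l \<ge> 2"
    and e1_cong: "e1 mod 2 ^ (l + 1) = 2 ^ l"
    and e2_dvd: "2 ^ l dvd e2"
    and div1: "2 * e2 dvd e1 * (r + 1)"
    and div2: "e1 dvd e2 * (r - 1)"
    and s_range: "1 \<le> s" "s \<le> e1 div gcd e1 e2"
    and t_range: "1 \<le> t" "t \<le> e2 div gcd e1 e2"
  shows
    "(even (t * e1 * (r + 1) div (2 * e2) + (r + 1) div 2) \<and> even (s * f1 + t * f2)
        \<longrightarrow> (\<exists>C :: (nat \<Rightarrow> 'a::{field,finite}) set. MDS_self_dual_code (s * f1 + t * f2) C))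
     \<and> (even (t * e1 * (r + 1) div (2 * e2) + t * (r + 1) div 2) \<and> even ((t - 1) * (r + 1) div 2)
          \<and> odd (s * f1 + t * f2)
        \<longrightarrow> (\<exists>C :: (nat \<Rightarrow> 'a) set. MDS_self_dual_code (s * f1 + t * f2 + 1) C))
     \<and> (even (t * e1 * (r + 1) div (2 * e2) + t * (r + 1) div 2) \<and> even ((t - 1) * (r + 1) div 2)
          \<and> even (s * f1 + t * f2)
        \<longrightarrow> (\<exists>C :: (nat \<Rightarrow> 'a) set. MDS_self_dual_code (s * f1 + t * f2 + 2) C))"
proof -
  obtain w :: 'a where w0: "w \<noteq> 0" and gen: "\<forall>x. x \<noteq> 0 \<longrightarrow> (\<exists>i. x = w ^ i)"
    using gen_exists by blast
  interpret fsetup r q e1 f1 e2 f2 l s t "q - 1" "(r + 1) div 2" "(q - 1) div 2" "gcd e1 e2"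
    "e1 div 2" "e1 div gcd e1 e2" "e2 div gcd e1 e2" "e1 * (r + 1) div (2 * e2)" w
    apply unfold_locales
    apply (fact r_pp r_odd q_def pos fac1 fac2 l2 e1_cong e2_dvd div1 div2 s_range t_range)+
    apply (rule refl)+
    apply (fact field_card gen w0)+
    done
  note eqs = T0_t h_t(1) h_t(2)
  show ?thesis
  proof (intro conjI impI)
    assume a: "even (t * e1 * (r + 1) div (2 * e2) + (r + 1) div 2) \<and> even (s * f1 + t * f2)"
    show "\<exists>C :: (nat \<Rightarrow> 'a) set. MDS_self_dual_code (s * f1 + t * f2) C"
      by (rule case1) (use a in \<open>simp_all only: eqs simp_thms\<close>)
  next
    assume a: "even (t * e1 * (r + 1) div (2 * e2) + t * (r + 1) div 2) \<and> even ((t - 1) * (r + 1) div 2)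
          \<and> odd (s * f1 + t * f2)"
    show "\<exists>C :: (nat \<Rightarrow> 'a) set. MDS_self_dual_code (s * f1 + t * f2 + 1) C"
      by (rule case2) (use a in \<open>simp_all only: eqs simp_thms\<close>)
  next
    assume a: "even (t * e1 * (r + 1) div (2 * e2) + t * (r + 1) div 2) \<and> even ((t - 1) * (r + 1) div 2)
          \<and> even (s * f1 + t * f2)"
    show "\<exists>C :: (nat \<Rightarrow> 'a) set. MDS_self_dual_code (s * f1 + t * f2 + 2) C"
      by (rule case3) (use a in \<open>simp_all only: eqs simp_thms\<close>)
  qed
qed

end
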